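(* Let $\rho>0$ and assume $\Gamma(0)<\Gamma(1)$ and $1+\rho\ln\mu(0)<0$. Let $\nu_\star(\rho)$ be the unique solution in $(0,\mu(1))$ of $1+\rho\ln G(\nu,\mu(1))=0$. Then for every $\rho$-admissible scaling $n\mapsto L_n$, \[ \lim_{n\to\infty}\mathbb{P}\big[\mathbb{M}(n;L_n)\text{ contains no isolated nodes}\big]=\begin{cases}0 & \text{if } 1+\rho\ln\big(\Gamma(1)^{\nu_\star(\rho)}\Gamma(0)^{1-\nu_\star(\rho)}\big)<0,\\ 1 & \text{if } 1+\rho\ln\big(\Gamma(1)^{\nu_\star(\rho)}\Gamma(0)^{1-\nu_\star(\rho)}\big)>0.\end{cases} \]
   Context: Homogeneous binary MAG model. Fix $\mu(0),\mu(1)\in(0,1)$ with $\mu(0)+\mu(1)=1$, and a symmetric $2\times2$ matrix $(q(a,b))_{a,b\in\{0,1\}}$ with $q(0,1)=q(1,0)$ and $0<q(a,b)<1$. On a probability space, let $\{A, A_\ell(u):\ell,u\ge1\}$ be i.i.d. $\{0,1\}$-valued with $\mathbb{P}[A=1]=\mu(1)$, and independently let $\{U(u,v):1\le u<v\}$ be i.i.d. uniform on $(0,1)$, $U(v,u)=U(u,v)$. For $L\ge1$, $\mathbf{A}_L(u)=(A_1(u),\dots,A_L(u))$, $Q_L(\mathbf a,\mathbf b)=\prod_{\ell=1}^L q(a_\ell,b_\ell)$. The graph $\mathbb{M}(n;L)$ on $\{1,\dots,n\}$ has an edge between distinct $u,v$ iff $U(u,v)\le Q_L(\mathbf A_L(u),\mathbf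 A_L(v))$; a node is isolated if it has no neighbor. $\Gamma(a)=\mathbb{E}[q(a,A)]=q(a,0)\mu(0)+q(a,1)\mu(1)$. A scaling $n\mapsto L_n$ of positive integers is $\rho$-admissible if $L_n\sim\rho\ln n$. For $0<\nu,\mu<1$, $G(\nu,\mu)=(\mu/\nu)^\nu\big((1-\mu)/(1-\nu)\big)^{1-\nu}$, extended continuously to $\nu\in[0,1]$ by $G(0,\mu)=1-\mu$, $G(1,\mu)=\mu$. *)

theory Defs
  imports "HOL-Probability.Probability" "HOL-Library.Landau_Symbols"
begin

text \<open>Attribute values 0/1 are encoded as booleans (True = 1).\<close>
definition b2n :: "bool \<Rightarrow> nat" where "b2n b = (if b then 1 else 0)"

text \<open>Marginal mean Gamma(a) = q(a,0) mu(0) + q(a,1) mu(1), with mu(1) = p, mu(0) = 1 - p.\<close>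
definition Gam :: "real \<Rightarrow> (nat \<Rightarrow> nat \<Rightarrow> real) \<Rightarrow> nat \<Rightarrow> real" where
  "Gam p q a = q a 0 * (1 - p) + q a 1 * p"

definition QL :: "(nat \<Rightarrow> nat \<Rightarrow> real) \<Rightarrow> nat \<Rightarrow> (nat \<Rightarrow> bool) \<Rightarrow> (nat \<Rightarrow> bool) \<Rightarrow> real" where
  "QL q L a b = (\<Prod>l\<in>{1..L}. q (b2n (a l)) (b2n (b l)))"

text \<open>A graph is represented by its edge indicator on pairs (u,v) with u<v.\<close>
definition mag_pmf :: "real \<Rightarrow> (nat \<Rightarrow> nat \<Rightarrow> real) \<Rightarrow> nat \<Rightarrow> nat \<Rightarrow> (nat \<times> nat \<Rightarrow> bool) pmf" where
  "mag_pmf p q n L =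
     bind_pmf (Pi_pmf ({1..n} \<times> {1..L}) False (\<lambda>_. bernoulli_pmf p))
       (\<lambda>A. Pi_pmf {(u, v). 1 \<le> u \<and> u < v \<and> v \<le> n} False
              (\<lambda>(u, v). bernoulli_pmf (QL q L (\<lambda>l. A (u, l)) (\<lambda>l. A (v, l)))))"

definition no_isolated :: "nat \<Rightarrow> (nat \<times> nat \<Rightarrow> bool) \<Rightarrow> bool" where
  "no_isolated n E \<longleftrightarrow> (\<forall>u\<in>{1..n}. \<exists>v\<in>{1..n}. v \<noteq> u \<and> E (min u v, max u v))"

text \<open>G(nu,mu), extended continuously to nu in {0,1}.\<close>
definition G :: "real \<Rightarrow> real \<Rightarrow> real" where
  "G \<nu> \<mu> = (if \<nu> = 0 then 1 - \<mu> else if \<nu> = 1 then \<mu>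
             else (\<mu> / \<nu>) powr \<nu> * ((1 - \<mu>) / (1 - \<nu>)) powr (1 - \<nu>))"

definition nu_star :: "real \<Rightarrow> real \<Rightarrow> real" where
  "nu_star p \<rho> = (THE \<nu>. \<nu> \<in> {0<..<p} \<and> 1 + \<rho> * ln (G \<nu> p) = 0)"

definition admissible :: "real \<Rightarrow> (nat \<Rightarrow> nat) \<Rightarrow> bool" where
  "admissible \<rho> L \<longleftrightarrow> (\<forall>n. L n \<ge> 1) \<and> (\<lambda>n. real (L n)) \<sim>[at_top] (\<lambda>n. \<rho> * ln (real n))"

end

theory Submission
  imports Defs "HOL-Real_Asymp.Real_Asymp"
begin


lemma integral_bind_pmf_bounded:
  fixes f :: "'b \<Rightarrow> real"
  assumes "\<And>x. \<bar>f x\<bar> \<le> B"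
  shows "measure_pmf.expectation (bind_pmf M N) f = measure_pmf.expectation M (\<lambda>x. measure_pmf.expectation (N x) f)"
  unfolding measure_pmf_bind
  apply (rule integral_bind[where K="count_space UNIV" and B=B and B'=1])
  using assms by (auto simp: measure_pmf.emeasure_space_1 intro!: measure_pmf.finite_measure_axioms measure_pmf_in_subprob_algebra)

lemma prob_as_integral: "measure_pmf.prob M S = measure_pmf.expectation M (indicator S)"
  by simp

lemma prob_bind_pmf:
  "measure_pmf.prob (bind_pmf M N) S = measure_pmf.expectation M (\<lambda>x. measure_pmf.prob (N x) S)"
  unfolding prob_as_integral
  by (rule integral_bind_pmf_bounded[where B=1]) (auto simp: indicator_def)

definition Rw :: "real \<Rightarrow> nat \<Rightarrow> (nat \<Rightarrow> bool) pmf" where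
  "Rw p L = Pi_pmf {1..L} False (\<lambda>_. bernoulli_pmf p)"
definition Rows :: "real \<Rightarrow> nat \<Rightarrow> nat \<Rightarrow> (nat \<Rightarrow> nat \<Rightarrow> bool) pmf" where
  "Rows p n L = Pi_pmf {1..n} (\<lambda>_. False) (\<lambda>_. Rw p L)"
definition Pairs :: "nat \<Rightarrow> (nat \<times> nat) set" where
  "Pairs n = {(u, v). 1 \<le> u \<and> u < v \<and> v \<le> n}"
definition Edge :: "(nat \<Rightarrow> nat \<Rightarrow> real) \<Rightarrow> nat \<Rightarrow> nat \<Rightarrow> (nat \<Rightarrow> nat \<Rightarrow> bool) \<Rightarrow> (nat \<times> nat \<Rightarrow> bool) pmf" where
  "Edge q L n r = Pi_pmf (Pairs n) False (\<lambda>(u, v). bernoulli_pmf (QL q L (r u) (r v)))"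

lemma finite_Pairs: "finite (Pairs n)"
  by (rule finite_subset[of _ "{1..n} \<times> {1..n}"]) (auto simp: Pairs_def)

lemma finite_set_Rw: "finite (set_pmf (Rw p L))"
  unfolding Rw_def by (subst set_Pi_pmf) auto

lemma finite_set_Rows: "finite (set_pmf (Rows p n L))"
  unfolding Rows_def by (subst set_Pi_pmf) (auto intro!: finite_PiE_dflt finite_set_Rw)

lemma finite_set_Edge: "finite (set_pmf (Edge q L n r))"
  unfolding Edge_def by (subst set_Pi_pmf) (auto intro!: finite_PiE_dflt finite_Pairs)

lemma rows_decomp:
  fixes B :: "bool pmf"
  assumes "finite U" "finite J"
  shows "map_pmf (\<lambda>A u. if u \<in> U then (\<lambda>l. A (u, l)) else (\<lambda>_. False)) (Pi_pmf (U \<times> J) False (\<lambda>_. B))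
         = Pi_pmf U (\<lambda>_. False) (\<lambda>_. Pi_pmf J False (\<lambda>_. B))"
  using assms(1)
proof (induction rule: finite_induct)
  case empty
  then show ?case by (simp add: fun_eq_iff)
next
  case (insert x U)
  define P1 where "P1 = Pi_pmf ({x} \<times> J) False (\<lambda>_. B)"
  define P2 where "P2 = Pi_pmf (U \<times> J) False (\<lambda>_. B)"
  define Fu where "Fu = (\<lambda>(A::'a \<times> 'b \<Rightarrow> bool) u. if u \<in> U then (\<lambda>l. A (u, l)) else (\<lambda>_. False))"
  define h where "h = (\<lambda>l::'b. (x, l))"
  have fin: "finite ({x} \<times> J)" "finite (U \<times> J)" using insert assms by auto
  have disj: "({x} \<times> J) \<inter> (U \<times> J) = {}" using insert by auto
  have un: "insert x U \<times> J = ({x} \<times> J) \<union> (U \<times> J)" by auto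
  have R: "Pi_pmf J False (\<lambda>_. B) = map_pmf (\<lambda>g. g \<circ> h) P1"
    unfolding P1_def
    by (rule Pi_pmf_bij_betw) (auto simp: h_def bij_betw_def inj_on_def assms)
  have "Pi_pmf (insert x U) (\<lambda>_. False) (\<lambda>_. Pi_pmf J False (\<lambda>_. B))
      = map_pmf (\<lambda>(y,f). f(x:=y)) (pair_pmf (Pi_pmf J False (\<lambda>_. B)) (Pi_pmf U (\<lambda>_. False) (\<lambda>_. Pi_pmf J False (\<lambda>_. B))))"
    using insert by (subst Pi_pmf_insert) auto
  also have "\<dots> = map_pmf (\<lambda>(y,f). f(x:=y)) (pair_pmf (map_pmf (\<lambda>g. g \<circ> h) P1) (map_pmf Fu P2))"
    using insert.IH by (simp add: R Fu_def P2_def)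
  also have "\<dots> = map_pmf (\<lambda>(f,g). (Fu g)(x := f \<circ> h)) (pair_pmf P1 P2)"
    by (simp add: map_pair[symmetric] pmf.map_comp o_def case_prod_beta split_beta')
  finally have RHS: "Pi_pmf (insert x U) (\<lambda>_. False) (\<lambda>_. Pi_pmf J False (\<lambda>_. B)) =
     map_pmf (\<lambda>(f,g). (Fu g)(x := f \<circ> h)) (pair_pmf P1 P2)" .
  have "map_pmf (\<lambda>A u. if u \<in> insert x U then (\<lambda>l. A (u, l)) else (\<lambda>_. False)) (Pi_pmf (insert x U \<times> J) False (\<lambda>_. B))
     = map_pmf (\<lambda>A u. if u \<in> insert x U then (\<lambda>l. A (u, l)) else (\<lambda>_. False))
         (map_pmf (\<lambda>(f,g) y. if y \<in> {x} \<times> J then f y else g y) (pair_pmf P1 P2))"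
    unfolding un P1_def P2_def by (subst Pi_pmf_union[OF fin disj]) rule
  also have "\<dots> = map_pmf (\<lambda>(f,g). (Fu g)(x := f \<circ> h)) (pair_pmf P1 P2)"
    unfolding pmf.map_comp
  proof (rule map_pmf_cong[OF refl])
    fix z assume z: "z \<in> set_pmf (pair_pmf P1 P2)"
    obtain f g where zfg: "z = (f, g)" by (cases z)
    have f: "\<And>y. y \<notin> {x} \<times> J \<Longrightarrow> f y = False"
      using z zfg set_Pi_pmf_subset[OF fin(1), of False "\<lambda>_. B"] unfolding P1_def by auto
    have g: "\<And>y. y \<notin> U \<times> J \<Longrightarrow> g y = False"
      using z zfg set_Pi_pmf_subset[OF fin(2), of False "\<lambda>_. B"] unfolding P2_def by auto
    show "((\<lambda>A u. if u \<in> insert x U then (\<lambda>l. A (u, l)) else (\<lambda>_. False)) \<circ>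
          (\<lambda>(f,g) y. if y \<in> {x} \<times> J then f y else g y)) z = (\<lambda>(f,g). (Fu g)(x := f \<circ> h)) z"
      unfolding zfg using insert.hyps f g
      by (auto simp: fun_eq_iff Fu_def h_def)
  qed
  finally show ?case using RHS by simp
qed

lemma mag_pmf_rows: "mag_pmf p q n L = bind_pmf (Rows p n L) (Edge q L n)"
proof -
  have "Rows p n L = map_pmf (\<lambda>A u. if u \<in> {1..n} then (\<lambda>l. A (u, l)) else (\<lambda>_. False))
           (Pi_pmf ({1..n} \<times> {1..L}) False (\<lambda>_. bernoulli_pmf p))"
    unfolding Rows_def Rw_def by (rule rows_decomp[symmetric]) auto
  show ?thesis
    unfolding mag_pmf_def \<open>Rows p n L = _\<close> bind_map_pmf
    unfolding Edge_def Pairs_def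
    by (intro bind_pmf_cong refl, rule Pi_pmf_cong) auto
qed



lemma abs_prod_le1:
  fixes h :: "'b \<Rightarrow> real"
  assumes "\<And>v. 0 \<le> h v" "\<And>v. h v \<le> 1"
  shows "\<bar>\<Prod>v\<in>V. h v\<bar> \<le> 1"
  using assms by (simp add: prod_nonneg prod_le_1)

lemma indep_row:
  fixes f :: "'a \<Rightarrow> real" and h :: "'b \<Rightarrow> 'a \<Rightarrow> 'a \<Rightarrow> real"
  assumes N: "finite N" "u \<in> N" and R: "finite (set_pmf R)"
    and f: "\<And>a. \<bar>f a\<bar> \<le> 1" and h0: "\<And>v a b. 0 \<le> h v a b" and h1: "\<And>v a b. h v a b \<le> 1"
  shows "measure_pmf.expectation (Pi_pmf N d (\<lambda>_. R)) (\<lambda>r. f (r u) * (\<Prod>v\<in>N-{u}. h v (r u) (r v)))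
       = measure_pmf.expectation R (\<lambda>a. f a * (\<Prod>v\<in>N-{u}. measure_pmf.expectation R (h v a)))"
proof -
  have NN: "N = insert u (N - {u})" using N by auto
  have P: "Pi_pmf N d (\<lambda>_. R) = bind_pmf R (\<lambda>y. map_pmf (\<lambda>g. g(u:=y)) (Pi_pmf (N - {u}) d (\<lambda>_. R)))"
    by (subst NN, subst Pi_pmf_insert') (use N in \<open>auto simp: map_pmf_def\<close>)
  have bnd: "\<bar>f (r u) * (\<Prod>v\<in>N-{u}. h v (r u) (r v))\<bar> \<le> 1" for r
    using f[of "r u"] abs_prod_le1[of "\<lambda>v. h v (r u) (r v)" "N-{u}"] h0 h1
    by (simp add: abs_mult mult_le_one)
  have "measure_pmf.expectation (Pi_pmf N d (\<lambda>_. R)) (\<lambda>r. f (r u) * (\<Prod>v\<in>N-{u}. h v (r u) (r v)))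
     = measure_pmf.expectation R (\<lambda>y. measure_pmf.expectation (map_pmf (\<lambda>g. g(u:=y)) (Pi_pmf (N - {u}) d (\<lambda>_. R)))
           (\<lambda>r. f (r u) * (\<Prod>v\<in>N-{u}. h v (r u) (r v))))"
    unfolding P by (rule integral_bind_pmf_bounded[where B=1]) (rule bnd)
  also have "\<dots> = measure_pmf.expectation R (\<lambda>y. f y * measure_pmf.expectation (Pi_pmf (N - {u}) d (\<lambda>_. R))
           (\<lambda>g. \<Prod>v\<in>N-{u}. h v y (g v)))"
  proof (rule Bochner_Integration.integral_cong[OF refl])
    fix y
    have "measure_pmf.expectation (map_pmf (\<lambda>g. g(u:=y)) (Pi_pmf (N - {u}) d (\<lambda>_. R)))
           (\<lambda>r. f (r u) * (\<Prod>v\<in>N-{u}. h v (r u) (r v)))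
        = measure_pmf.expectation (Pi_pmf (N - {u}) d (\<lambda>_. R)) (\<lambda>g. f y * (\<Prod>v\<in>N-{u}. h v y (g v)))"
      by (simp add: integral_map_pmf)
    also have "\<dots> = f y * measure_pmf.expectation (Pi_pmf (N - {u}) d (\<lambda>_. R)) (\<lambda>g. \<Prod>v\<in>N-{u}. h v y (g v))"
      by simp
    finally show "measure_pmf.expectation (map_pmf (\<lambda>g. g(u:=y)) (Pi_pmf (N - {u}) d (\<lambda>_. R)))
           (\<lambda>r. f (r u) * (\<Prod>v\<in>N-{u}. h v (r u) (r v))) = f y * measure_pmf.expectation (Pi_pmf (N - {u}) d (\<lambda>_. R))
           (\<lambda>g. \<Prod>v\<in>N-{u}. h v y (g v))" .
  qed
  also have "\<dots> = measure_pmf.expectation R (\<lambda>a. f a * (\<Prod>v\<in>N-{u}. measure_pmf.expectation R (h v a)))"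
    by (intro Bochner_Integration.integral_cong refl arg_cong2[where f="(*)"] expectation_prod_Pi_pmf)
       (use N R h0 in \<open>auto intro: integrable_measure_pmf_finite\<close>)
  finally show ?thesis .
qed



definition qok :: "(nat \<Rightarrow> nat \<Rightarrow> real) \<Rightarrow> bool" where
  "qok q \<longleftrightarrow> (\<forall>a\<in>{0,1}. \<forall>b\<in>{0,1}. 0 < q a b \<and> q a b < 1) \<and> q 0 1 = q 1 0"

lemma b2n_range: "b2n x \<in> {0, 1}" by (simp add: b2n_def)

lemma qok_pos: "qok q \<Longrightarrow> 0 < q (b2n x) (b2n y)"
  unfolding qok_def b2n_def by auto
lemma qok_lt1: "qok q \<Longrightarrow> q (b2n x) (b2n y) < 1"
  unfolding qok_def b2n_def by auto
lemma qok_sym: "qok q \<Longrightarrow> q (b2n x) (b2n y) = q (b2n y) (b2n x)"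
  unfolding qok_def b2n_def by auto

lemma QL_pos: "qok q \<Longrightarrow> 0 < QL q L a b"
  unfolding QL_def by (intro prod_pos) (auto intro: qok_pos)
lemma QL_le1: "qok q \<Longrightarrow> QL q L a b \<le> 1"
  unfolding QL_def by (intro prod_le_1) (auto intro: less_imp_le qok_pos qok_lt1)
lemma QL_sym: "qok q \<Longrightarrow> QL q L a b = QL q L b a"
  unfolding QL_def by (intro prod.cong refl qok_sym)

lemma Gam_pos: "qok q \<Longrightarrow> 0 < p \<Longrightarrow> p < 1 \<Longrightarrow> a \<in> {0,1} \<Longrightarrow> 0 < Gam p q a"
  unfolding qok_def Gam_def by (auto intro!: add_pos_pos)
lemma Gam_lt1: "qok q \<Longrightarrow> 0 < p \<Longrightarrow> p < 1 \<Longrightarrow> a \<in> {0,1} \<Longrightarrow> Gam p q a < 1"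
proof -
  assume q: "qok q" and p: "0 < p" "p < 1" and a: "a \<in> {0,1}"
  have "q a 0 < 1" "q a 1 < 1" using q a unfolding qok_def by auto
  then have "q a 0 * (1 - p) + q a 1 * p < 1 * (1 - p) + 1 * p"
    using p by (intro add_strict_mono mult_strict_right_mono) auto
  then show ?thesis by (simp add: Gam_def)
qed

lemma GL_eq:
  assumes p: "0 < p" "p < 1" and q: "qok q"
  shows "measure_pmf.expectation (Rw p L) (QL q L a) = (\<Prod>l\<in>{1..L}. Gam p q (b2n (a l)))"
proof -
  have "measure_pmf.expectation (Rw p L) (QL q L a)
      = measure_pmf.expectation (Pi_pmf {1..L} False (\<lambda>_. bernoulli_pmf p)) (\<lambda>b. \<Prod>l\<in>{1..L}. q (b2n (a l)) (b2n (b l)))"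
    by (simp add: Rw_def QL_def[abs_def])
  also have "\<dots> = (\<Prod>l\<in>{1..L}. measure_pmf.expectation (bernoulli_pmf p) (\<lambda>y. q (b2n (a l)) (b2n y)))"
    by (rule expectation_prod_Pi_pmf) (auto intro: integrable_measure_pmf_finite less_imp_le qok_pos[OF q])
  also have "\<dots> = (\<Prod>l\<in>{1..L}. Gam p q (b2n (a l)))"
    using p by (intro prod.cong refl) (simp add: Gam_def b2n_def)
  finally show ?thesis .
qed



definition Kc :: "nat \<Rightarrow> (nat \<Rightarrow> bool) \<Rightarrow> nat" where "Kc L a = card {l\<in>{1..L}. a l}"

lemma Kc_le: "Kc L a \<le> L"
  unfolding Kc_def by (rule order.trans[OF card_mono[of "{1..L}"]]) auto

lemma prod_Gam_closed:
  "(\<Prod>l\<in>{1..L}. Gam p q (b2n (a l))) = Gam p q 1 ^ Kc L a * Gam p q 0 ^ (L - Kc L a)"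
proof -
  have "(\<Prod>l\<in>{1..L}. Gam p q (b2n (a l))) = (\<Prod>l\<in>{1..L}. if a l then Gam p q 1 else Gam p q 0)"
    by (intro prod.cong refl) (simp add: b2n_def)
  also have "\<dots> = (\<Prod>l\<in>{1..L} \<inter> {l. a l}. Gam p q 1) * (\<Prod>l\<in>{1..L} \<inter> - {l. a l}. Gam p q 0)"
    by (rule prod.If_cases) auto
  also have "\<dots> = Gam p q 1 ^ card ({1..L} \<inter> {l. a l}) * Gam p q 0 ^ card ({1..L} \<inter> - {l. a l})"
    by simp
  also have "card ({1..L} \<inter> {l. a l}) = Kc L a" unfolding Kc_def by (intro arg_cong[where f=card]) auto
  also have "{1..L} \<inter> - {l. a l} = {1..L} - {l\<in>{1..L}. a l}" by auto
  also have "card ({1..L} - {l\<in>{1..L}. a l}) = L - Kc L a" unfolding Kc_def by (subst card_Diff_subset) auto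
  finally show ?thesis .
qed

lemma GL_exp:
  assumes "0 < g1" "0 < g0" "K \<le> L"
  shows "g1 ^ K * g0 ^ (L - K) = exp (real K * ln g1 + (real L - real K) * ln g0)"
proof -
  have "real L - real K = real (L - K)" using assms by (simp add: of_nat_diff)
  have e1: "g1 ^ K = exp (real K * ln g1)" using assms by (subst exp_of_nat_mult) simp
  have e2: "g0 ^ (L - K) = exp (real (L - K) * ln g0)" using assms by (subst exp_of_nat_mult) simp
  show ?thesis unfolding e1 e2 \<open>real L - real K = _\<close> exp_add by simp
qed

lemma prob_iso:
  assumes q: "qok q" and u: "u \<in> {1..n}"
  shows "measure_pmf.prob (Edge q L n r) {E. \<forall>v\<in>{1..n}-{u}. \<not> E (min u v, max u v)}
       = (\<Prod>v\<in>{1..n}-{u}. 1 - QL q L (r u) (r v))"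
proof -
  define Iu where "Iu = {pr \<in> Pairs n. fst pr = u \<or> snd pr = u}"
  define B where "B = (\<lambda>pr. if pr \<in> Iu then {False} else (UNIV :: bool set))"
  define Q' where "Q' = (\<lambda>pr. case pr of (a, b) \<Rightarrow> QL q L (r a) (r b))"
  have set_eq: "{E. \<forall>v\<in>{1..n}-{u}. \<not> E (min u v, max u v)} = Pi (Pairs n) B"
  proof (intro equalityI subsetI)
    fix E assume E: "E \<in> {E. \<forall>v\<in>{1..n}-{u}. \<not> E (min u v, max u v)}"
    show "E \<in> Pi (Pairs n) B"
    proof
      fix pr assume pr: "pr \<in> Pairs n"
      obtain a b where ab: "pr = (a, b)" by (cases pr)
      show "E pr \<in> B pr"
      proof (cases "pr \<in> Iu")
        case True
        then have "(a = u \<and> b \<in> {1..n}-{u} \<and> pr = (min u b, max u b)) \<or> (b = u \<and> a \<in> {1..n}-{u} \<and> pr = (min u a, max u a))"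
          using pr ab by (auto simp: Iu_def Pairs_def)
        then have "\<not> E pr" using E by auto
        then show ?thesis using True by (simp add: B_def)
      qed (simp add: B_def)
    qed
  next
    fix E assume E: "E \<in> Pi (Pairs n) B"
    show "E \<in> {E. \<forall>v\<in>{1..n}-{u}. \<not> E (min u v, max u v)}"
    proof (intro CollectI ballI notI)
      fix v assume v: "v \<in> {1..n} - {u}" and Ev: "E (min u v, max u v)"
      have "(min u v, max u v) \<in> Iu" using u v by (auto simp: Iu_def Pairs_def min_def max_def)
      then have "(min u v, max u v) \<in> Pairs n" by (simp add: Iu_def)
      with E have "E (min u v, max u v) \<in> B (min u v, max u v)" by auto
      with \<open>(min u v, max u v) \<in> Iu\<close> Ev show False by (simp add: B_def)
    qed
  qed
  have "measure_pmf.prob (Edge q L n r) (Pi (Pairs n) B)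
      = (\<Prod>pr\<in>Pairs n. measure_pmf.prob (bernoulli_pmf (Q' pr)) (B pr))"
    unfolding Edge_def by (subst measure_Pi_pmf_Pi) (auto simp: finite_Pairs Q'_def case_prod_beta)
  also have "\<dots> = (\<Prod>pr\<in>Pairs n. if pr \<in> Iu then 1 - Q' pr else 1)"
  proof (intro prod.cong refl)
    fix pr
    have "0 \<le> Q' pr" "Q' pr \<le> 1" using QL_pos[OF q] QL_le1[OF q]
      by (auto simp: Q'_def case_prod_beta intro: less_imp_le)
    then show "measure_pmf.prob (bernoulli_pmf (Q' pr)) (B pr) = (if pr \<in> Iu then 1 - Q' pr else 1)"
      by (auto simp: B_def measure_pmf_single)
  qed
  also have "\<dots> = (\<Prod>pr\<in>Iu. 1 - Q' pr)"
    unfolding Iu_def by (subst prod.inter_filter[symmetric]) (auto simp: finite_Pairs)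
  also have "\<dots> = (\<Prod>v\<in>{1..n}-{u}. 1 - Q' (min u v, max u v))"
  proof (rule prod.reindex_bij_betw[symmetric])
    show "bij_betw (\<lambda>v. (min u v, max u v)) ({1..n} - {u}) Iu"
    proof (rule bij_betwI[where g="\<lambda>pr. if fst pr = u then snd pr else fst pr"])
      show "(\<lambda>v. (min u v, max u v)) \<in> {1..n} - {u} \<rightarrow> Iu"
        using u by (auto simp: Iu_def Pairs_def min_def max_def)
      show "(\<lambda>pr. if fst pr = u then snd pr else fst pr) \<in> Iu \<rightarrow> {1..n} - {u}"
        by (auto simp: Iu_def Pairs_def)
      show "(if fst (min u x, max u x) = u then snd (min u x, max u x) else fst (min u x, max u x)) = x"
        if "x \<in> {1..n} - {u}" for x
        using that by (auto simp: min_def max_def)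
      show "(min u (if fst y = u then snd y else fst y), max u (if fst y = u then snd y else fst y)) = y"
        if "y \<in> Iu" for y
        using that by (cases y) (auto simp: Iu_def Pairs_def min_def max_def)
    qed
  qed
  also have "\<dots> = (\<Prod>v\<in>{1..n}-{u}. 1 - QL q L (r u) (r v))"
    by (intro prod.cong refl) (auto simp: Q'_def min_def max_def QL_sym[OF q])
  finally show ?thesis using set_eq by simp
qed

lemma expect_edge:
  assumes q: "qok q" and uv: "u \<in> {1..n}" "v \<in> {1..n}" "u \<noteq> v"
  shows "measure_pmf.expectation (Edge q L n r) (\<lambda>E. if E (min u v, max u v) then 1 else 0 :: real)
       = QL q L (r u) (r v)"
proof -
  have pr: "(min u v, max u v) \<in> Pairs n" using uv by (auto simp: Pairs_def min_def max_def)
  have "measure_pmf.expectation (Edge q L n r) (\<lambda>E. if E (min u v, max u v) then 1 else 0 :: real)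
      = measure_pmf.expectation (map_pmf (\<lambda>E. E (min u v, max u v)) (Edge q L n r)) (\<lambda>b. if b then 1 else 0 :: real)"
    by simp
  also have "map_pmf (\<lambda>E. E (min u v, max u v)) (Edge q L n r) = bernoulli_pmf (QL q L (r (min u v)) (r (max u v)))"
    unfolding Edge_def by (subst Pi_pmf_component) (use pr finite_Pairs in auto)
  also have "QL q L (r (min u v)) (r (max u v)) = QL q L (r u) (r v)"
    by (auto simp: min_def max_def QL_sym[OF q])
  finally show ?thesis
    using QL_pos[OF q] QL_le1[OF q] by (simp add: less_imp_le)
qed



definition GLf :: "real \<Rightarrow> (nat \<Rightarrow> nat \<Rightarrow> real) \<Rightarrow> nat \<Rightarrow> (nat \<Rightarrow> bool) \<Rightarrow> real" where
  "GLf p q L a = (\<Prod>l\<in>{1..L}. Gam p q (b2n (a l)))"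

lemma Gam_b2n: "qok q \<Longrightarrow> 0 < p \<Longrightarrow> p < 1 \<Longrightarrow> 0 < Gam p q (b2n x) \<and> Gam p q (b2n x) < 1"
  using Gam_pos[of q p "b2n x"] Gam_lt1[of q p "b2n x"] b2n_range[of x] by auto

lemma GLf_nonneg: "qok q \<Longrightarrow> 0 < p \<Longrightarrow> p < 1 \<Longrightarrow> 0 \<le> GLf p q L a"
  unfolding GLf_def by (intro prod_nonneg) (use Gam_b2n in \<open>auto intro: less_imp_le\<close>)
lemma GLf_le1: "qok q \<Longrightarrow> 0 < p \<Longrightarrow> p < 1 \<Longrightarrow> GLf p q L a \<le> 1"
  unfolding GLf_def by (intro prod_le_1) (use Gam_b2n in \<open>auto intro: less_imp_le\<close>)

lemma part1_bound:
  assumes q: "qok q" and p: "0 < p" "p < 1"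
  shows "measure_pmf.prob (mag_pmf p q n L) {E. \<not> no_isolated n E}
     \<le> real n * measure_pmf.expectation (Rw p L) (\<lambda>a. (1 - GLf p q L a) ^ (n - 1))"
proof -
  define N where "N = {1..n}"
  define iso where "iso = (\<lambda>u. {E. \<forall>v\<in>N-{u}. \<not> E (min u v, max u v)})"
  have ev: "{E. \<not> no_isolated n E} = (\<Union>u\<in>N. iso u)"
    unfolding no_isolated_def iso_def N_def by auto
  have pw: "measure_pmf.prob (Edge q L n r) {E. \<not> no_isolated n E}
      \<le> (\<Sum>u\<in>N. \<Prod>v\<in>N-{u}. 1 - QL q L (r u) (r v))" for r
  proof -
    have "measure_pmf.prob (Edge q L n r) {E. \<not> no_isolated n E} \<le> (\<Sum>u\<in>N. measure_pmf.prob (Edge q L n r) (iso u))"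
      unfolding ev by (rule measure_pmf.finite_measure_subadditive_finite) (auto simp: N_def)
    also have "\<dots> = (\<Sum>u\<in>N. \<Prod>v\<in>N-{u}. 1 - QL q L (r u) (r v))"
      unfolding iso_def N_def by (intro sum.cong refl prob_iso[OF q]) auto
    finally show ?thesis .
  qed
  have "measure_pmf.prob (mag_pmf p q n L) {E. \<not> no_isolated n E}
      = measure_pmf.expectation (Rows p n L) (\<lambda>r. measure_pmf.prob (Edge q L n r) {E. \<not> no_isolated n E})"
    unfolding mag_pmf_rows by (rule prob_bind_pmf)
  also have "\<dots> \<le> measure_pmf.expectation (Rows p n L) (\<lambda>r. \<Sum>u\<in>N. \<Prod>v\<in>N-{u}. 1 - QL q L (r u) (r v))"
    by (intro integral_mono integrable_measure_pmf_finite finite_set_Rows pw)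
  also have "\<dots> = (\<Sum>u\<in>N. measure_pmf.expectation (Rows p n L) (\<lambda>r. \<Prod>v\<in>N-{u}. 1 - QL q L (r u) (r v)))"
    by (rule Bochner_Integration.integral_sum) (intro integrable_measure_pmf_finite finite_set_Rows)
  also have "\<dots> = (\<Sum>u\<in>N. measure_pmf.expectation (Rw p L) (\<lambda>a. (1 - GLf p q L a) ^ (n - 1)))"
  proof (intro sum.cong refl)
    fix u assume u: "u \<in> N"
    have "measure_pmf.expectation (Rows p n L) (\<lambda>r. \<Prod>v\<in>N-{u}. 1 - QL q L (r u) (r v))
        = measure_pmf.expectation (Rows p n L) (\<lambda>r. (\<lambda>_. 1) (r u) * (\<Prod>v\<in>N-{u}. (\<lambda>v a b. 1 - QL q L a b) v (r u) (r v)))"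
      by simp
    also have "\<dots> = measure_pmf.expectation (Rw p L) (\<lambda>a. 1 * (\<Prod>v\<in>N-{u}. measure_pmf.expectation (Rw p L) (\<lambda>b. 1 - QL q L a b)))"
      unfolding Rows_def N_def
      by (rule indep_row) (use u QL_pos[OF q] QL_le1[OF q] in \<open>auto simp: N_def finite_set_Rw less_imp_le\<close>)
    also have "\<dots> = measure_pmf.expectation (Rw p L) (\<lambda>a. (1 - GLf p q L a) ^ (n - 1))"
    proof (intro Bochner_Integration.integral_cong refl)
      fix a
      have "measure_pmf.expectation (Rw p L) (\<lambda>b. 1 - QL q L a b) = 1 - GLf p q L a"
        using GL_eq[OF p q, of L a]
        by (subst Bochner_Integration.integral_diff) (auto intro: integrable_measure_pmf_finite finite_set_Rw simp: GLf_def)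
      moreover have "card (N - {u}) = n - 1" using u by (simp add: N_def)
      ultimately show "1 * (\<Prod>v\<in>N-{u}. measure_pmf.expectation (Rw p L) (\<lambda>b. 1 - QL q L a b)) = (1 - GLf p q L a) ^ (n - 1)"
        by simp
    qed
    finally show "measure_pmf.expectation (Rows p n L) (\<lambda>r. \<Prod>v\<in>N-{u}. 1 - QL q L (r u) (r v))
        = measure_pmf.expectation (Rw p L) (\<lambda>a. (1 - GLf p q L a) ^ (n - 1))" .
  qed
  also have "\<dots> = real n * measure_pmf.expectation (Rw p L) (\<lambda>a. (1 - GLf p q L a) ^ (n - 1))"
    by (simp add: N_def)
  finally show ?thesis .
qed



lemma markov_edges:
  assumes q: "qok q" and S: "S \<subseteq> {1..n}" "card S > 0"
  shows "measure_pmf.prob (Edge q L n r) {E. no_isolated n E}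
     \<le> (\<Sum>u\<in>S. \<Sum>v\<in>{1..n}-{u}. QL q L (r u) (r v)) / real (card S)"
proof -
  define N where "N = {1..n}"
  define Y where "Y = (\<lambda>E. \<Sum>u\<in>S. \<Sum>v\<in>N-{u}. if E (min u v, max u v) then 1 else (0::real))"
  have finS: "finite S" using S by (auto intro: finite_subset simp: N_def)
  have sub: "{E. no_isolated n E} \<subseteq> {E \<in> space (measure_pmf (Edge q L n r)). Y E \<ge> real (card S)}"
  proof safe
    fix E assume E: "no_isolated n E"
    have "real (card S) = (\<Sum>u\<in>S. 1)" by simp
    also have "\<dots> \<le> Y E"
      unfolding Y_def
    proof (intro sum_mono)
      fix u assume u: "u \<in> S"
      then obtain v where v: "v \<in> N - {u}" "E (min u v, max u v)"
        using E S unfolding no_isolated_def N_def by blast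
      have "(if E (min u v, max u v) then 1 else (0::real)) \<le> (\<Sum>v\<in>N-{u}. if E (min u v, max u v) then 1 else 0)"
        by (rule member_le_sum[of v "N-{u}" "\<lambda>v. if E (min u v, max u v) then 1 else (0::real)"]) (use v in \<open>auto simp: N_def\<close>)
      then show "1 \<le> (\<Sum>v\<in>N-{u}. if E (min u v, max u v) then 1 else (0::real))" using v by simp
    qed
    finally show "real (card S) \<le> Y E" .
  qed simp
  have "measure_pmf.prob (Edge q L n r) {E. no_isolated n E}
      \<le> measure_pmf.prob (Edge q L n r) {E \<in> space (measure_pmf (Edge q L n r)). Y E \<ge> real (card S)}"
    by (rule measure_pmf.finite_measure_mono[OF sub]) simp
  also have "\<dots> \<le> measure_pmf.expectation (Edge q L n r) Y / real (card S)"
    by (rule integral_Markov_inequality_measure[where A=UNIV])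
       (use S in \<open>auto intro!: integrable_measure_pmf_finite finite_set_Edge AE_pmfI sum_nonneg simp: Y_def split: if_splits\<close>)
  also have "measure_pmf.expectation (Edge q L n r) Y = (\<Sum>u\<in>S. \<Sum>v\<in>N-{u}. QL q L (r u) (r v))"
    unfolding Y_def
    apply (subst Bochner_Integration.integral_sum, simp add: integrable_measure_pmf_finite finite_set_Edge)
    apply (intro sum.cong refl)
    apply (subst Bochner_Integration.integral_sum, simp add: integrable_measure_pmf_finite finite_set_Edge)
    apply (intro sum.cong refl)
    apply (rule expect_edge[OF q])
    using S by (auto simp: N_def)
  finally show ?thesis by (simp add: N_def)
qed

lemma light_term:
  assumes q: "qok q" and p: "0 < p" "p < 1" and uv: "u \<in> {1..n}" "v \<in> {1..n}" "u \<noteq> v"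
    and Bd: "\<And>a. P a \<Longrightarrow> GLf p q L a \<le> Bd"
  shows "measure_pmf.expectation (Rows p n L) (\<lambda>r. (if P (r u) then 1 else 0) * QL q L (r u) (r v))
      \<le> measure_pmf.prob (Rw p L) {a. P a} * Bd"
proof -
  define N where "N = {1..n}"
  have "measure_pmf.expectation (Rows p n L) (\<lambda>r. (if P (r u) then 1 else 0) * QL q L (r u) (r v))
      = measure_pmf.expectation (Rows p n L) (\<lambda>r. (\<lambda>a. if P a then 1 else 0) (r u) *
            (\<Prod>w\<in>N-{u}. (\<lambda>w a b. if w = v then QL q L a b else 1) w (r u) (r w)))"
    using uv by (simp add: N_def)
  also have "\<dots> = measure_pmf.expectation (Rw p L) (\<lambda>a. (if P a then 1 else 0) *
            (\<Prod>w\<in>N-{u}. measure_pmf.expectation (Rw p L) (\<lambda>b. if w = v then QL q L a b else 1)))"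
    unfolding Rows_def N_def
    by (rule indep_row) (use uv QL_pos[OF q] QL_le1[OF q] in \<open>auto simp: finite_set_Rw less_imp_le\<close>)
  also have "\<dots> = measure_pmf.expectation (Rw p L) (\<lambda>a. (if P a then 1 else 0) * GLf p q L a)"
  proof (intro Bochner_Integration.integral_cong refl)
    fix a
    have "(\<Prod>w\<in>N-{u}. measure_pmf.expectation (Rw p L) (\<lambda>b. if w = v then QL q L a b else 1))
        = (\<Prod>w\<in>N-{u}. if w = v then GLf p q L a else 1)"
      by (intro prod.cong refl) (auto simp: GL_eq[OF p q] GLf_def)
    also have "\<dots> = GLf p q L a" using uv by (simp add: N_def)
    finally show "(if P a then 1 else 0) * (\<Prod>w\<in>N-{u}. measure_pmf.expectation (Rw p L) (\<lambda>b. if w = v then QL q L a b else 1))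
        = (if P a then 1 else 0) * GLf p q L a" by simp
  qed
  also have "\<dots> \<le> measure_pmf.expectation (Rw p L) (\<lambda>a. indicator {a. P a} a * Bd)"
    by (intro integral_mono integrable_measure_pmf_finite finite_set_Rw) (auto simp: Bd)
  also have "\<dots> = measure_pmf.prob (Rw p L) {a. P a} * Bd"
    by simp
  finally show ?thesis .
qed

lemma part0_bound:
  assumes q: "qok q" and p: "0 < p" "p < 1"
    and pi: "\<pi> = measure_pmf.prob (Rw p L) {a. P a}" and mu: "\<mu> = real n * \<pi>" "\<mu> > 0"
    and Bd: "\<And>a. P a \<Longrightarrow> GLf p q L a \<le> Bd"
  shows "measure_pmf.prob (mag_pmf p q n L) {E. no_isolated n E}
     \<le> measure_pmf.prob (Rows p n L) {r. real (card {u\<in>{1..n}. P (r u)}) \<le> \<mu> / 2}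
       + 2 / \<mu> * (real n * real (n - 1) * (\<pi> * Bd))"
proof -
  define N where "N = {1..n}"
  define Xs where "Xs = {r. real (card {u\<in>N. P (r u)}) \<le> \<mu> / 2}"
  define T where "T = (\<lambda>r. \<Sum>u\<in>N. \<Sum>v\<in>N-{u}. (if P (r u) then 1 else 0) * QL q L (r u) (r v))"
  have Tnn: "0 \<le> T r" for r
    unfolding T_def using QL_pos[OF q] by (intro sum_nonneg) (auto intro: less_imp_le)
  have pw: "measure_pmf.prob (Edge q L n r) {E. no_isolated n E} \<le> indicator Xs r + 2 / \<mu> * T r" for r
  proof (cases "r \<in> Xs")
    case True
    then show ?thesis using Tnn[of r] mu by (simp add: measure_pmf.prob_le_1 add_increasing2)
  next
    case False
    define S where "S = {u\<in>N. P (r u)}"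
    have cS: "real (card S) > \<mu> / 2" using False by (simp add: Xs_def S_def)
    then have cS0: "card S > 0" using mu by (auto intro: ccontr)
    have "measure_pmf.prob (Edge q L n r) {E. no_isolated n E}
        \<le> (\<Sum>u\<in>S. \<Sum>v\<in>{1..n}-{u}. QL q L (r u) (r v)) / real (card S)"
      by (rule markov_edges[OF q _ cS0]) (auto simp: S_def N_def)
    also have "(\<Sum>u\<in>S. \<Sum>v\<in>{1..n}-{u}. QL q L (r u) (r v)) = T r"
    proof -
      have "T r = (\<Sum>u\<in>N. if P (r u) then (\<Sum>v\<in>N-{u}. QL q L (r u) (r v)) else 0)"
        unfolding T_def by (intro sum.cong refl) auto
      also have "\<dots> = (\<Sum>u\<in>S. \<Sum>v\<in>N-{u}. QL q L (r u) (r v))"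
        unfolding S_def by (rule sum.inter_filter[symmetric]) (simp add: N_def)
      finally show ?thesis by (simp add: N_def)
    qed
    also have "T r / real (card S) \<le> T r / (\<mu> / 2)"
      using cS mu Tnn[of r] by (intro divide_left_mono) auto
    also have "\<dots> = indicator Xs r + 2 / \<mu> * T r" using False by simp
    finally show ?thesis .
  qed
  have "measure_pmf.prob (mag_pmf p q n L) {E. no_isolated n E}
      = measure_pmf.expectation (Rows p n L) (\<lambda>r. measure_pmf.prob (Edge q L n r) {E. no_isolated n E})"
    unfolding mag_pmf_rows by (rule prob_bind_pmf)
  also have "\<dots> \<le> measure_pmf.expectation (Rows p n L) (\<lambda>r. indicator Xs r + 2 / \<mu> * T r)"
    by (intro integral_mono integrable_measure_pmf_finite finite_set_Rows pw)
  also have "\<dots> = measure_pmf.prob (Rows p n L) Xs + 2 / \<mu> * measure_pmf.expectation (Rows p n L) T"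
    by (subst Bochner_Integration.integral_add) (auto intro: integrable_measure_pmf_finite finite_set_Rows)
  finally have main: "measure_pmf.prob (mag_pmf p q n L) {E. no_isolated n E}
      \<le> measure_pmf.prob (Rows p n L) Xs + 2 / \<mu> * measure_pmf.expectation (Rows p n L) T" .
  have "measure_pmf.expectation (Rows p n L) T
      = (\<Sum>u\<in>N. \<Sum>v\<in>N-{u}. measure_pmf.expectation (Rows p n L) (\<lambda>r. (if P (r u) then 1 else 0) * QL q L (r u) (r v)))"
    unfolding T_def
    apply (subst Bochner_Integration.integral_sum, simp add: integrable_measure_pmf_finite finite_set_Rows)
    apply (intro sum.cong refl)
    apply (subst Bochner_Integration.integral_sum, simp add: integrable_measure_pmf_finite finite_set_Rows)
    apply simp
    done
  also have "\<dots> \<le> (\<Sum>u\<in>N. \<Sum>v\<in>N-{u}. \<pi> * Bd)"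
    unfolding pi by (intro sum_mono light_term[OF q p _ _ _ Bd]) (auto simp: N_def)
  also have "\<dots> = real n * real (n - 1) * (\<pi> * Bd)"
    by (cases n) (auto simp: N_def)
  finally have ET: "measure_pmf.expectation (Rows p n L) T \<le> real n * real (n - 1) * (\<pi> * Bd)" .
  have "2 / \<mu> * measure_pmf.expectation (Rows p n L) T \<le> 2 / \<mu> * (real n * real (n - 1) * (\<pi> * Bd))"
    using mu ET by (intro mult_left_mono) auto
  then show ?thesis using main by (simp add: Xs_def N_def)
qed



definition gf :: "real \<Rightarrow> real \<Rightarrow> real" where
  "gf p \<nu> = \<nu> * (ln p - ln \<nu>) + (1 - \<nu>) * (ln (1 - p) - ln (1 - \<nu>))"

lemma prod_if_const:
  fixes t :: real
  assumes "finite A"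
  shows "(\<Prod>x\<in>A. if P x then t else 1) = t ^ card {x\<in>A. P x}"
  using prod.inter_filter[OF assms, of "\<lambda>_. t" P] by simp

lemma rows_chernoff:
  assumes pi: "\<pi> = measure_pmf.prob (Rw p L) {a. P a}" and mu: "\<mu> = real n * \<pi>"
  shows "measure_pmf.prob (Rows p n L) {r. real (card {u\<in>{1..n}. P (r u)}) \<le> \<mu> / 2} \<le> exp (\<mu> * (ln 2 - 1) / 2)"
proof -
  define N where "N = {1..n}"
  define F where "F = (\<lambda>r. exp (\<mu> / 2 * ln 2) * (\<Prod>u\<in>N. if P (r u) then 1/2 else (1::real)))"
  have pw: "indicator {r. real (card {u\<in>N. P (r u)}) \<le> \<mu> / 2} r \<le> F r" for r
  proof (cases "real (card {u\<in>N. P (r u)}) \<le> \<mu> / 2")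
    case True
    have "(\<Prod>u\<in>N. if P (r u) then 1/2 else (1::real)) = (1/2) ^ card {u\<in>N. P (r u)}"
      by (rule prod_if_const) (simp add: N_def)
    also have "\<dots> = exp (- (real (card {u\<in>N. P (r u)}) * ln 2))"
      by (simp add: exp_minus exp_of_nat_mult power_one_over inverse_eq_divide)
    finally have "F r = exp (\<mu> / 2 * ln 2) * exp (- (real (card {u\<in>N. P (r u)}) * ln 2))"
      by (simp add: F_def)
    then have "F r = exp (\<mu> / 2 * ln 2 - real (card {u\<in>N. P (r u)}) * ln 2)"
      by (simp add: exp_add[symmetric])
    moreover have "\<mu> / 2 * ln 2 - real (card {u\<in>N. P (r u)}) * ln 2 \<ge> 0"
      using True by (intro mult_right_mono[of _ _ "ln 2", THEN diff_ge_0_iff_ge[THEN iffD2]]) auto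
    ultimately show ?thesis using True by simp
  next
    case False
    then show ?thesis by (simp add: F_def prod_nonneg)
  qed
  have "measure_pmf.prob (Rows p n L) {r. real (card {u\<in>N. P (r u)}) \<le> \<mu> / 2}
      \<le> measure_pmf.expectation (Rows p n L) F"
    unfolding prob_as_integral
    by (intro integral_mono integrable_measure_pmf_finite finite_set_Rows pw)
  also have "measure_pmf.expectation (Rows p n L) F =
      exp (\<mu> / 2 * ln 2) * measure_pmf.expectation (Rows p n L) (\<lambda>r. \<Prod>u\<in>N. if P (r u) then 1/2 else (1::real))"
    by (simp add: F_def)
  also have "measure_pmf.expectation (Rows p n L) (\<lambda>r. \<Prod>u\<in>N. if P (r u) then 1/2 else (1::real))
      = (\<Prod>u\<in>N. measure_pmf.expectation (Rw p L) (\<lambda>a. if P a then 1/2 else (1::real)))"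
    unfolding Rows_def N_def
    by (rule expectation_prod_Pi_pmf) (auto intro: integrable_measure_pmf_finite finite_set_Rw)
  also have "measure_pmf.expectation (Rw p L) (\<lambda>a. if P a then 1/2 else (1::real)) = 1 - \<pi> / 2"
  proof -
    have "measure_pmf.expectation (Rw p L) (\<lambda>a. if P a then 1/2 else (1::real))
        = measure_pmf.expectation (Rw p L) (\<lambda>a. 1 - 1/2 * indicator {a. P a} a)"
      by (intro Bochner_Integration.integral_cong refl) auto
    also have "\<dots> = 1 - \<pi> / 2"
      unfolding pi
      by (subst Bochner_Integration.integral_diff) (auto intro: integrable_measure_pmf_finite finite_set_Rw)
    finally show ?thesis .
  qed
  also have "(\<Prod>u\<in>N. 1 - \<pi> / 2) = (1 - \<pi> / 2) ^ n" by (simp add: N_def)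
  also have "\<dots> \<le> exp (- \<pi> / 2) ^ n"
  proof (rule power_mono)
    show "1 - \<pi> / 2 \<le> exp (- \<pi> / 2)" using exp_ge_add_one_self[of "- \<pi> / 2"] by simp
    have "\<pi> \<le> 1" using measure_pmf.prob_le_1[of "Rw p L" "{a. P a}"] pi by simp
    then show "0 \<le> 1 - \<pi> / 2" by simp
  qed
  also have "exp (- \<pi> / 2) ^ n = exp (- \<mu> / 2)"
    unfolding mu by (simp add: exp_of_nat_mult[symmetric])
  finally show ?thesis
    by (simp add: N_def mult_left_mono exp_add[symmetric] field_simps)
qed

lemma Kc_prod: "(\<Prod>l\<in>{1..L}. if a l then t else 1) = (t::real) ^ Kc L a"
  unfolding Kc_def by (rule prod_if_const) simp

lemma rw_chernoff:
  assumes p: "0 < p" "p < 1" and nu: "0 < \<nu>" "\<nu> < p"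
  shows "measure_pmf.prob (Rw p L) {a. real (Kc L a) \<le> \<nu> * real L} \<le> exp (real L * gf p \<nu>)"
proof -
  define t where "t = \<nu> * (1 - p) / (p * (1 - \<nu>))"
  have t0: "0 < t" using p nu by (simp add: t_def)
  have t1: "t < 1"
  proof -
    have "\<nu> * (1 - p) < p * (1 - \<nu>)" using nu p by (simp add: algebra_simps)
    then show ?thesis using p nu by (simp add: t_def)
  qed
  have lnt: "ln t < 0" using t0 t1 by simp
  define F where "F = (\<lambda>a. exp (- (\<nu> * real L) * ln t) * (\<Prod>l\<in>{1..L}. if a l then t else (1::real)))"
  have pw: "indicator {a. real (Kc L a) \<le> \<nu> * real L} a \<le> F a" for a
  proof (cases "real (Kc L a) \<le> \<nu> * real L")
    case True
    have "F a = exp (- (\<nu> * real L) * ln t) * exp (real (Kc L a) * ln t)"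
      unfolding F_def Kc_prod using t0 by (simp add: exp_of_nat_mult)
    also have "\<dots> = exp ((real (Kc L a) - \<nu> * real L) * ln t)"
      by (simp add: exp_add[symmetric] algebra_simps)
    finally have "F a = exp ((real (Kc L a) - \<nu> * real L) * ln t)" .
    moreover have "(real (Kc L a) - \<nu> * real L) * ln t \<ge> 0"
      using True lnt by (intro mult_nonpos_nonpos) auto
    ultimately show ?thesis using True by simp
  next
    case False
    then show ?thesis using t0 by (simp add: F_def prod_nonneg)
  qed
  have "measure_pmf.prob (Rw p L) {a. real (Kc L a) \<le> \<nu> * real L} \<le> measure_pmf.expectation (Rw p L) F"
    unfolding prob_as_integral
    by (intro integral_mono integrable_measure_pmf_finite finite_set_Rw pw)
  also have "measure_pmf.expectation (Rw p L) F
     = exp (- (\<nu> * real L) * ln t) * measure_pmf.expectation (Rw p L) (\<lambda>a. \<Prod>l\<in>{1..L}. if a l then t else (1::real))"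
    by (simp add: F_def)
  also have "measure_pmf.expectation (Rw p L) (\<lambda>a. \<Prod>l\<in>{1..L}. if a l then t else (1::real))
      = (\<Prod>l\<in>{1..L}. measure_pmf.expectation (bernoulli_pmf p) (\<lambda>b. if b then t else (1::real)))"
    unfolding Rw_def
    by (rule expectation_prod_Pi_pmf) (use t0 in \<open>auto intro: integrable_measure_pmf_finite\<close>)
  also have "\<dots> = ((1 - p) / (1 - \<nu>)) ^ L"
  proof -
    have "t * p + (1 - p) = (1 - p) / (1 - \<nu>)"
      using p nu by (simp add: t_def field_simps)
    then show ?thesis using p by simp
  qed
  also have "exp (- (\<nu> * real L) * ln t) * ((1 - p) / (1 - \<nu>)) ^ L = exp (real L * gf p \<nu>)"
  proof -
    have pos: "0 < (1 - p) / (1 - \<nu>)" using p nu by simp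
    have "((1 - p) / (1 - \<nu>)) ^ L = exp (real L * (ln (1 - p) - ln (1 - \<nu>)))"
    proof -
      have "exp (ln (1 - p) - ln (1 - \<nu>)) = (1 - p) / (1 - \<nu>)"
        using p nu by (simp add: exp_diff)
      then show ?thesis by (simp add: exp_of_nat_mult)
    qed
    moreover have lt: "ln t = ln \<nu> + ln (1 - p) - ln p - ln (1 - \<nu>)"
      using p nu by (simp add: t_def ln_div ln_mult)
    moreover have "- (\<nu> * real L) * ln t + real L * (ln (1 - p) - ln (1 - \<nu>)) = real L * gf p \<nu>"
      unfolding lt gf_def by (simp add: algebra_simps)
    ultimately show ?thesis
      by (simp add: exp_add[symmetric])
  qed
  finally show ?thesis by simp
qed

lemma binom_lower:
  assumes p: "0 < p" "p < 1"
  shows "measure_pmf.prob (Rw p L) {a. Kc L a \<le> k} \<ge> real (L choose k) * p ^ k * (1 - p) ^ (L - k)"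
proof -
  have B: "binomial_pmf L p = map_pmf (Kc L) (Rw p L)"
    unfolding Rw_def Kc_def[abs_def] by (rule binomial_pmf_altdef') (use p in auto)
  have "real (L choose k) * p ^ k * (1 - p) ^ (L - k) = measure_pmf.prob (binomial_pmf L p) {k}"
    using p by (simp add: measure_pmf_single)
  also have "\<dots> \<le> measure_pmf.prob (binomial_pmf L p) {..k}"
    by (rule measure_pmf.finite_measure_mono) auto
  also have "\<dots> = measure_pmf.prob (Rw p L) {a. Kc L a \<le> k}"
    unfolding B by (simp add: vimage_def)
  finally show ?thesis .
qed



lemma binom_ratio: "real (L choose Suc j) * real (Suc j) = real (L choose j) * (real L - real j)" if "j < L"
proof -
  have "(L choose Suc j) * Suc j = L * ((L - 1) choose j)" using binomial_absorption[of j L] by (simp add: mult.commute)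
  also have "\<dots> = (L - j) * (L choose j)" using binomial_absorb_comp[of L j] by simp
  finally have "real ((L choose Suc j) * Suc j) = real ((L - j) * (L choose j))" by simp
  then show ?thesis using that by (simp add: of_nat_diff algebra_simps)
qed

lemma max_term:
  assumes k: "0 < k" "k < L"
  defines "r \<equiv> real k / real L"
  shows "real (L choose k) * r ^ k * (1 - r) ^ (L - k) \<ge> 1 / (real L + 1)"
proof -
  define T where "T = (\<lambda>j. real (L choose j) * r ^ j * (1 - r) ^ (L - j))"
  have r0: "0 < r" and r1: "r < 1" using k by (auto simp: r_def)
  have rat: "T (Suc j) * (real (Suc j) * (1 - r)) = T j * ((real L - real j) * r)" if "j < L" for j
  proof -
    have Lj: "L - j = Suc (L - Suc j)" using that by simp
    have "T (Suc j) * (real (Suc j) * (1 - r))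
        = (real (L choose Suc j) * real (Suc j)) * (r * r ^ j) * ((1 - r) * (1 - r) ^ (L - Suc j))"
      unfolding T_def by (simp only: power_Suc mult_ac)
    also have "\<dots> = (real (L choose j) * (real L - real j)) * (r * r ^ j) * ((1 - r) * (1 - r) ^ (L - Suc j))"
      by (simp only: binom_ratio[OF that])
    also have "(1 - r) * (1 - r) ^ (L - Suc j) = (1 - r) ^ (L - j)"
      by (simp only: Lj power_Suc)
    also have "(real (L choose j) * (real L - real j)) * (r * r ^ j) * (1 - r) ^ (L - j) = T j * ((real L - real j) * r)"
      unfolding T_def by (simp only: mult_ac)
    finally show ?thesis .
  qed
  have rexp: "(real L - real j) * r - (real j + 1) * (1 - r) = ((real L - real j) * real k - (real j + 1) * (real L - real k)) / real L" for j
    using k by (simp add: r_def field_simps)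
  have key: "(real L - real j) * real k - (real j + 1) * (real L - real k) = real k * (real L + 1) - real L * (real j + 1)" for j
    by (simp add: algebra_simps)
  have up: "T j \<le> T (Suc j)" if "j < k" for j
  proof -
    have "real L * (real j + 1) \<le> real L * real k" using that by (intro mult_left_mono) auto
    also have "\<dots> \<le> real k * (real L + 1)" by (simp add: algebra_simps)
    finally have "(real j + 1) * (real L - real k) \<le> (real L - real j) * real k" using key[of j] by linarith
    then have "(real j + 1) * (1 - r) \<le> (real L - real j) * r"
    proof -
      have "0 \<le> ((real L - real j) * real k - (real j + 1) * (real L - real k)) / real L"
        using \<open>(real j + 1) * (real L - real k) \<le> (real L - real j) * real k\<close> k by (intro divide_nonneg_pos) auto
      then show ?thesis using rexp[of j] by linarith
    qed
    moreover have "T j \<ge> 0" unfolding T_def using r0 r1 by simp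
    ultimately have "T j * ((real j + 1) * (1 - r)) \<le> T j * ((real L - real j) * r)"
      by (intro mult_left_mono) auto
    also have "\<dots> = T (Suc j) * ((real j + 1) * (1 - r))" using rat[of j] that k by (simp add: add.commute)
    finally show ?thesis using r1 by (simp add: mult_le_cancel_right)
  qed
  have down: "T (Suc j) \<le> T j" if "k \<le> j" "j < L" for j
  proof -
    have "real k * (real L + 1) \<le> real L * (real k + 1)" using k by (simp add: algebra_simps)
    also have "\<dots> \<le> real L * (real j + 1)" using that by (intro mult_left_mono) auto
    finally have "(real L - real j) * real k \<le> (real j + 1) * (real L - real k)" using key[of j] by linarith
    then have "(real L - real j) * r \<le> (real j + 1) * (1 - r)"
    proof -
      have "((real L - real j) * real k - (real j + 1) * (real L - real k)) / real L \<le> 0"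
        using \<open>(real L - real j) * real k \<le> (real j + 1) * (real L - real k)\<close> k by (intro divide_nonpos_pos) auto
      then show ?thesis using rexp[of j] by linarith
    qed
    moreover have "T (Suc j) \<ge> 0" unfolding T_def using r0 r1 by simp
    ultimately have "T (Suc j) * ((real L - real j) * r) \<le> T (Suc j) * ((real j + 1) * (1 - r))"
      by (intro mult_left_mono) auto
    also have "\<dots> = T j * ((real L - real j) * r)" using rat[of j] that by (simp add: add.commute)
    finally show ?thesis using r0 that by (simp add: mult_le_cancel_right)
  qed
  have le_k: "T j \<le> T k" if "j \<le> L" for j
  proof (cases "j \<le> k")
    case True
    show ?thesis using True
    proof (induction j rule: inc_induct)
      case (step m)
      then show ?case using up[of m] by linarith
    qed simp
  next
    case False
    then have "k \<le> j" by simp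
    then show ?thesis using that
    proof (induction j rule: dec_induct)
      case (step m)
      then show ?case using down[of m] by linarith
    qed simp
  qed
  have "1 = (r + (1 - r)) ^ L" by simp
  also have "\<dots> = (\<Sum>j\<le>L. T j)" unfolding T_def binomial_ring by simp
  also have "\<dots> \<le> (\<Sum>j\<le>L. T k)" by (intro sum_mono le_k) auto
  also have "\<dots> = (real L + 1) * T k" by simp
  finally show ?thesis unfolding T_def by (simp add: field_simps)
qed



lemma ln_G: assumes "0 < p" "p < 1" "0 < \<nu>" "\<nu> < 1" shows "ln (G \<nu> p) = gf p \<nu>"
  using assms by (simp add: G_def gf_def ln_mult ln_powr ln_div)

lemma gf_p: "gf p p = 0" by (simp add: gf_def)

lemma gf_lim0: assumes "0 < p" "p < 1" shows "(gf p \<longlongrightarrow> ln (1 - p)) (at_right 0)"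
  unfolding gf_def[abs_def] using assms by real_asymp

lemma gf_deriv: assumes "0 < \<nu>" "\<nu> < 1"
  shows "(gf p has_real_derivative (ln p - ln \<nu> - ln (1 - p) + ln (1 - \<nu>))) (at \<nu>)"
proof -
  have D: "((\<lambda>\<nu>. \<nu> * (ln p - ln \<nu>) + (1 - \<nu>) * (ln (1 - p) - ln (1 - \<nu>))) has_real_derivative
          (1 * (ln p - ln \<nu>) + \<nu> * (0 - 1 / \<nu>) + ((0 - 1) * (ln (1 - p) - ln (1 - \<nu>)) + (1 - \<nu>) * (0 - (0 - 1) / (1 - \<nu>))))) (at \<nu>)"
    using assms by (auto intro!: derivative_eq_intros)
  have eq: "1 * (ln p - ln \<nu>) + \<nu> * (0 - 1 / \<nu>) + ((0 - 1) * (ln (1 - p) - ln (1 - \<nu>)) + (1 - \<nu>) * (0 - (0 - 1) / (1 - \<nu>)))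
       = ln p - ln \<nu> - ln (1 - p) + ln (1 - \<nu>)" using assms by (simp add: field_simps)
  show ?thesis using D unfolding eq gf_def[abs_def] .
qed

lemma gf_cont: assumes "0 < a" "b < 1" shows "continuous_on {a..b} (gf p)"
proof -
  have "\<forall>x\<in>{a..b}. isCont (gf p) x"
  proof
    fix x assume "x \<in> {a..b}"
    then have "0 < x" "x < 1" using assms by auto
    then show "isCont (gf p) x" using gf_deriv DERIV_isCont by blast
  qed
  then show ?thesis by (rule continuous_at_imp_continuous_on)
qed

lemma gf_strict_mono:
  assumes p: "0 < p" "p < 1" and xy: "0 < x" "x < y" "y \<le> p"
  shows "gf p x < gf p y"
proof (rule DERIV_pos_imp_increasing_open[OF xy(2)])
  fix z assume z: "x < z" "z < y"
  then have z01: "0 < z" "z < 1" "z < p" using xy p by auto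
  have "z * (1 - p) < p * (1 - z)" using z01 by (simp add: algebra_simps)
  then have "ln (z * (1 - p)) < ln (p * (1 - z))" using z01 p by (subst ln_less_cancel_iff) auto
  then have "0 < ln p - ln z - ln (1 - p) + ln (1 - z)" using z01 p by (simp add: ln_mult)
  then show "\<exists>d. (gf p has_real_derivative d) (at z) \<and> 0 < d" using gf_deriv[OF z01(1,2)] by blast
next
  show "continuous_on {x..y} (gf p)" using gf_cont xy p by simp
qed

lemma gf_mono:
  assumes p: "0 < p" "p < 1" and xy: "0 < x" "x \<le> y" "y \<le> p"
  shows "gf p x \<le> gf p y"
  using gf_strict_mono[OF p, of x y] xy by (cases "x = y") auto

lemma nu_star_props:
  assumes p: "0 < p" "p < 1" and rho: "\<rho> > 0" and mu0: "1 + \<rho> * ln (1 - p) < 0"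
  shows "0 < nu_star p \<rho>" "nu_star p \<rho> < p" "1 + \<rho> * gf p (nu_star p \<rho>) = 0"
proof -
  define e where "e = - (1 + \<rho> * ln (1 - p)) / (2 * \<rho>)"
  have e0: "e > 0" using mu0 rho by (simp add: e_def divide_pos_pos)
  have "eventually (\<lambda>x. gf p x < ln (1 - p) + e) (at_right 0)"
    using order_tendstoD(2)[OF gf_lim0[OF p], of "ln (1 - p) + e"] e0 by simp
  moreover have "eventually (\<lambda>x. x < p) (at_right 0)"
    using eventually_at_right_real[OF p(1)] by (rule eventually_mono) auto
  moreover have "eventually (\<lambda>x. 0 < x) (at_right (0::real))"
    by (simp add: eventually_at_right_less)
  ultimately have "eventually (\<lambda>x. gf p x < ln (1 - p) + e \<and> x < p \<and> 0 < x) (at_right 0)"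
    by (simp add: eventually_conj_iff)
  then obtain a where a: "gf p a < ln (1 - p) + e" "a < p" "0 < a"
    using eventually_happens'[OF trivial_limit_at_right_real] by blast
  have phia: "1 + \<rho> * gf p a < 0"
  proof -
    have "\<rho> * gf p a < \<rho> * (ln (1 - p) + e)" using a rho by simp
    also have "\<rho> * (ln (1 - p) + e) = \<rho> * ln (1 - p) - (1 + \<rho> * ln (1 - p)) / 2"
      using rho by (simp add: e_def field_simps)
    finally show ?thesis using mu0 by argo
  qed
  have cont: "continuous_on {a..p} (\<lambda>x. 1 + \<rho> * gf p x)"
    using gf_cont[of a p p] a p by (auto intro!: continuous_intros)
  obtain x where x: "a \<le> x" "x \<le> p" "1 + \<rho> * gf p x = 0"
    using IVT'[of "\<lambda>x. 1 + \<rho> * gf p x" a 0 p, OF _ _ _ cont] phia a by (auto simp: gf_p)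
  have xa: "x \<noteq> a" using x phia by auto
  have xp: "x \<noteq> p" using x by (auto simp: gf_p)
  have x0: "0 < x" "x < p" using x xa xp a by auto
  have uniq: "y = x" if "y \<in> {0<..<p}" "1 + \<rho> * ln (G y p) = 0" for y
  proof -
    have "1 + \<rho> * gf p y = 0" using that ln_G[OF p, of y] p by auto
    show "y = x"
    proof (rule ccontr)
      assume "y \<noteq> x"
      then consider "y < x" | "x < y" by linarith
      then show False
      proof cases
        case 1 then have "gf p y < gf p x" using gf_strict_mono[OF p, of y x] that x0 by auto
        then show False using \<open>1 + \<rho> * gf p y = 0\<close> x rho by (smt (verit) mult_strict_left_mono)
      next
        case 2 then have "gf p x < gf p y" using gf_strict_mono[OF p, of x y] that x0 by auto
        then show False using \<open>1 + \<rho> * gf p y = 0\<close> x rho by (smt (verit) mult_strict_left_mono)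
      qed
    qed
  qed
  have xin: "x \<in> {0<..<p} \<and> 1 + \<rho> * ln (G x p) = 0" using x0 x ln_G[OF p, of x] p by auto
  have "nu_star p \<rho> = x"
    unfolding nu_star_def by (rule the_equality) (use xin uniq in auto)
  then show "0 < nu_star p \<rho>" "nu_star p \<rho> < p" "1 + \<rho> * gf p (nu_star p \<rho>) = 0"
    using x0 x by auto
qed



lemma adm_ratio:
  assumes rho: "\<rho> > 0" and adm: "admissible \<rho> L"
  shows "((\<lambda>n. real (L n) / ln (real n)) \<longlongrightarrow> \<rho>) sequentially"
proof -
  have L1: "\<And>n. L n \<ge> 1" and eq: "(\<lambda>n. real (L n)) \<sim>[at_top] (\<lambda>n. \<rho> * ln (real n))"
    using adm by (auto simp: admissible_def)
  have "((\<lambda>n. if real (L n) = 0 \<and> \<rho> * ln (real n) = 0 then 1 else real (L n) / (\<rho> * ln (real n))) \<longlongrightarrow> 1) at_top"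
    by (rule asymp_equivD[OF eq])
  moreover have "(\<lambda>n. if real (L n) = 0 \<and> \<rho> * ln (real n) = 0 then 1 else real (L n) / (\<rho> * ln (real n)))
      = (\<lambda>n. real (L n) / ln (real n) / \<rho>)"
  proof (intro ext)
    fix n
    have "L n \<noteq> 0" using L1[of n] by auto
    then show "(if real (L n) = 0 \<and> \<rho> * ln (real n) = 0 then 1 else real (L n) / (\<rho> * ln (real n)))
      = real (L n) / ln (real n) / \<rho>" by simp
  qed
  ultimately have "((\<lambda>n. real (L n) / ln (real n) / \<rho>) \<longlongrightarrow> 1) sequentially" by simp
  then have "((\<lambda>n. real (L n) / ln (real n) / \<rho> * \<rho>) \<longlongrightarrow> 1 * \<rho>) sequentially"
    by (intro tendsto_mult tendsto_const)
  then show ?thesis using rho by simp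
qed

lemma ev_ln_pos: "eventually (\<lambda>n::nat. ln (real n) > 0) sequentially"
  using eventually_ge_at_top[of "2::nat"] by (rule eventually_mono) auto

lemma lin_comb_lim:
  assumes R: "((\<lambda>n. real (L n) / ln (real n)) \<longlongrightarrow> \<rho>) sequentially"
  shows "((\<lambda>n. 1 + real (L n) / ln (real n) * c) \<longlongrightarrow> 1 + \<rho> * c) sequentially"
  by (intro tendsto_intros R)

lemma lin_comb_eq: "ln (real n) > 0 \<Longrightarrow> ln (real n) + real (L n) * c = (1 + real (L n) / ln (real n) * c) * ln (real n)"
  by (simp add: field_simps)

lemma asym_neg:
  assumes R: "((\<lambda>n. real (L n) / ln (real n)) \<longlongrightarrow> \<rho>) sequentially" and c: "1 + \<rho> * c < 0"
  shows "((\<lambda>n. real n * exp (real (L n) * c)) \<longlongrightarrow> 0) sequentially"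
proof -
  have "filterlim (\<lambda>n. (1 + real (L n) / ln (real n) * c) * ln (real n)) at_bot sequentially"
    by (rule filterlim_tendsto_neg_mult_at_bot[OF lin_comb_lim[OF R] c])
       (rule filterlim_compose[OF ln_at_top filterlim_real_sequentially])
  then have "filterlim (\<lambda>n. ln (real n) + real (L n) * c) at_bot sequentially"
    by (rule filterlim_cong[THEN iffD1, rotated 3]) (auto intro: eventually_mono[OF ev_ln_pos] simp: lin_comb_eq)
  then have "((\<lambda>n. exp (ln (real n) + real (L n) * c)) \<longlongrightarrow> 0) sequentially"
    by (rule filterlim_compose[OF exp_at_bot])
  then show ?thesis
    by (rule Lim_transform_eventually)
       (auto intro!: eventually_mono[OF eventually_ge_at_top[of "1::nat"]] simp: exp_add)
qed

lemma asym_pos: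
  assumes R: "((\<lambda>n. real (L n) / ln (real n)) \<longlongrightarrow> \<rho>) sequentially" and c: "1 + \<rho> * c > 0"
  shows "eventually (\<lambda>n. ln (real n) + real (L n) * c \<ge> (1 + \<rho> * c) / 2 * ln (real n)) sequentially"
proof -
  have "eventually (\<lambda>n. 1 + real (L n) / ln (real n) * c > (1 + \<rho> * c) / 2) sequentially"
    using order_tendstoD(1)[OF lin_comb_lim[OF R], of "(1 + \<rho> * c) / 2" c] c by simp
  then show ?thesis using ev_ln_pos
  proof (eventually_elim)
    case (elim n)
    then show ?case using lin_comb_eq[of n L c]
      by (simp add: mult_right_mono less_imp_le)
  qed
qed

lemma asym_L_large:
  assumes R: "((\<lambda>n. real (L n) / ln (real n)) \<longlongrightarrow> \<rho>) sequentially" and rho: "\<rho> > 0"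
  shows "eventually (\<lambda>n. real (L n) \<ge> M) sequentially"
proof -
  have "eventually (\<lambda>n. real (L n) / ln (real n) > \<rho> / 2) sequentially"
    using order_tendstoD(1)[OF R, of "\<rho> / 2"] rho by simp
  moreover have "eventually (\<lambda>n. ln (real n) \<ge> 2 * M / \<rho>) sequentially"
    using filterlim_compose[OF ln_at_top filterlim_real_sequentially]
    by (simp add: filterlim_at_top)
  ultimately show ?thesis using ev_ln_pos
  proof (eventually_elim)
    case (elim n)
    then have "real (L n) > \<rho> / 2 * ln (real n)" by (simp add: field_simps)
    moreover have "\<rho> / 2 * ln (real n) \<ge> \<rho> / 2 * (2 * M / \<rho>)" using elim rho by (intro mult_left_mono) auto
    ultimately show ?case using rho by simp
  qed
qed

lemma asym_L_upper:
  assumes R: "((\<lambda>n. real (L n) / ln (real n)) \<longlongrightarrow> \<rho>) sequentially"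
  shows "eventually (\<lambda>n. real (L n) \<le> (\<rho> + 1) * ln (real n)) sequentially"
proof -
  have "eventually (\<lambda>n. real (L n) / ln (real n) < \<rho> + 1) sequentially"
    using order_tendstoD(2)[OF R, of "\<rho> + 1"] by simp
  then show ?thesis using ev_ln_pos
  proof (eventually_elim)
    case (elim n)
    then show ?case by (simp add: field_simps)
  qed
qed



lemma binom_term_lower:
  assumes p: "0 < p" "p < 1" and k: "0 < k" "k < L"
  shows "real (L choose k) * p ^ k * (1 - p) ^ (L - k) \<ge> exp (real L * gf p (real k / real L)) / (real L + 1)"
proof -
  define r where "r = real k / real L"
  have r0: "0 < r" and r1: "r < 1" using k by (auto simp: r_def)
  have Lr: "real L * r = real k" using k by (simp add: r_def)
  have Lr': "real L * (1 - r) = real (L - k)" using k by (simp add: r_def field_simps of_nat_diff)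
  have "real L * gf p r = real k * (ln p - ln r) + real (L - k) * (ln (1 - p) - ln (1 - r))"
    unfolding gf_def by (simp add: Lr[symmetric] Lr'[symmetric] algebra_simps)
  then have "exp (real L * gf p r) = exp (ln p - ln r) ^ k * exp (ln (1 - p) - ln (1 - r)) ^ (L - k)"
    by (simp add: exp_add exp_of_nat_mult)
  also have "\<dots> = (p / r) ^ k * ((1 - p) / (1 - r)) ^ (L - k)"
    using p r0 r1 by (simp add: exp_diff)
  finally have E: "exp (real L * gf p r) = (p / r) ^ k * ((1 - p) / (1 - r)) ^ (L - k)" .
  have "p ^ k * (1 - p) ^ (L - k) = (r ^ k * (1 - r) ^ (L - k)) * exp (real L * gf p r)"
    unfolding E using r0 r1 by (simp add: power_divide field_simps)
  then have "real (L choose k) * p ^ k * (1 - p) ^ (L - k) = (real (L choose k) * r ^ k * (1 - r) ^ (L - k)) * exp (real L * gf p r)"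
    by simp
  also have "\<dots> \<ge> 1 / (real L + 1) * exp (real L * gf p r)"
    using max_term[OF k] by (intro mult_right_mono) (auto simp: r_def)
  finally show ?thesis by (simp add: r_def)
qed

lemma GLf_exp:
  assumes q: "qok q" and p: "0 < p" "p < 1"
  shows "GLf p q L a = exp (real (Kc L a) * ln (Gam p q 1) + (real L - real (Kc L a)) * ln (Gam p q 0))"
  unfolding GLf_def prod_Gam_closed
  by (rule GL_exp) (use Gam_b2n[OF q p, of True] Gam_b2n[OF q p, of False] Kc_le in \<open>auto simp: b2n_def\<close>)

lemma GLf_ge:
  assumes q: "qok q" and p: "0 < p" "p < 1" and c: "ln (Gam p q 0) \<le> ln (Gam p q 1)"
    and K: "\<nu> * real L \<le> real (Kc L a)"
  shows "exp (real L * (\<nu> * ln (Gam p q 1) + (1 - \<nu>) * ln (Gam p q 0))) \<le> GLf p q L a"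
proof -
  have "real L * (\<nu> * ln (Gam p q 1) + (1 - \<nu>) * ln (Gam p q 0))
      \<le> real (Kc L a) * ln (Gam p q 1) + (real L - real (Kc L a)) * ln (Gam p q 0)"
  proof -
    have "(real (Kc L a) - \<nu> * real L) * (ln (Gam p q 1) - ln (Gam p q 0)) \<ge> 0"
      using K c by (intro mult_nonneg_nonneg) auto
    then show ?thesis by (simp add: algebra_simps)
  qed
  then show ?thesis unfolding GLf_exp[OF q p] by simp
qed

lemma GLf_le:
  assumes q: "qok q" and p: "0 < p" "p < 1" and c: "ln (Gam p q 0) \<le> ln (Gam p q 1)"
    and K: "real (Kc L a) \<le> \<nu> * real L"
  shows "GLf p q L a \<le> exp (real L * (\<nu> * ln (Gam p q 1) + (1 - \<nu>) * ln (Gam p q 0)))"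
proof -
  have "real (Kc L a) * ln (Gam p q 1) + (real L - real (Kc L a)) * ln (Gam p q 0)
      \<le> real L * (\<nu> * ln (Gam p q 1) + (1 - \<nu>) * ln (Gam p q 0))"
  proof -
    have "(\<nu> * real L - real (Kc L a)) * (ln (Gam p q 1) - ln (Gam p q 0)) \<ge> 0"
      using K c by (intro mult_nonneg_nonneg) auto
    then show ?thesis by (simp add: algebra_simps)
  qed
  then show ?thesis unfolding GLf_exp[OF q p] by simp
qed

lemma part1_fixed:
  assumes q: "qok q" and p: "0 < p" "p < 1" and c: "ln (Gam p q 0) \<le> ln (Gam p q 1)"
    and nu: "0 < \<nu>" "\<nu> < p"
  shows "measure_pmf.prob (mag_pmf p q n L) {E. \<not> no_isolated n E}
     \<le> real n * exp (real L * gf p \<nu>)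
       + real n * exp (- (real n - 1) * exp (real L * (\<nu> * ln (Gam p q 1) + (1 - \<nu>) * ln (Gam p q 0))))"
proof -
  define B where "B = exp (real L * (\<nu> * ln (Gam p q 1) + (1 - \<nu>) * ln (Gam p q 0)))"
  define A where "A = {a. real (Kc L a) \<le> \<nu> * real L}"
  have pw: "(1 - GLf p q L a) ^ (n - 1) \<le> indicator A a + exp (- (real n - 1) * B)" for a
  proof (cases "a \<in> A")
    case True
    have "(1 - GLf p q L a) ^ (n - 1) \<le> 1"
      using GLf_nonneg[OF q p] GLf_le1[OF q p] by (intro power_le_one) auto
    moreover have "0 < exp (- (real n - 1) * B)" by simp
    ultimately show ?thesis using True by (simp del: exp_gt_zero)
  next
    case False
    then have ge: "B \<le> GLf p q L a" unfolding B_def A_def by (intro GLf_ge[OF q p c]) auto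
    have "(1 - GLf p q L a) ^ (n - 1) \<le> exp (- GLf p q L a) ^ (n - 1)"
      using GLf_le1[OF q p] exp_ge_add_one_self[of "- GLf p q L a"] by (intro power_mono) auto
    also have "\<dots> = exp (- (real (n - 1)) * GLf p q L a)" by (simp add: exp_of_nat_mult[symmetric])
    also have "\<dots> \<le> exp (- (real n - 1) * B)"
    proof (cases n)
      case 0 then show ?thesis by (simp add: B_def)
    next
      case (Suc m)
      then show ?thesis using ge by (simp add: mult_left_mono)
    qed
    finally show ?thesis using False by simp
  qed
  have "measure_pmf.prob (mag_pmf p q n L) {E. \<not> no_isolated n E}
      \<le> real n * measure_pmf.expectation (Rw p L) (\<lambda>a. (1 - GLf p q L a) ^ (n - 1))"
    by (rule part1_bound[OF q p])
  also have "measure_pmf.expectation (Rw p L) (\<lambda>a. (1 - GLf p q L a) ^ (n - 1))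
      \<le> measure_pmf.expectation (Rw p L) (\<lambda>a. indicator A a + exp (- (real n - 1) * B))"
    by (intro integral_mono integrable_measure_pmf_finite finite_set_Rw pw)
  also have "\<dots> = measure_pmf.prob (Rw p L) A + exp (- (real n - 1) * B)"
    by (subst Bochner_Integration.integral_add) (auto intro: integrable_measure_pmf_finite finite_set_Rw)
  also have "measure_pmf.prob (Rw p L) A \<le> exp (real L * gf p \<nu>)"
    unfolding A_def by (rule rw_chernoff[OF p nu])
  finally show ?thesis
    by (simp add: B_def distrib_left mult_left_mono)
qed

lemma part0_fixed:
  assumes q: "qok q" and p: "0 < p" "p < 1" and c: "ln (Gam p q 0) \<le> ln (Gam p q 1)"
    and nu: "0 < \<nu>3" "\<nu>3 < \<nu>2" "\<nu>2 < p" and Lbig: "real L \<ge> 1 / (\<nu>2 - \<nu>3) + 1" and n: "n \<ge> 1"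
  shows "measure_pmf.prob (mag_pmf p q n L) {E. no_isolated n E}
     \<le> exp (real n * exp (real L * gf p \<nu>3) / (real L + 1) * ((ln 2 - 1) / 2))
       + 2 * real n * exp (real L * (\<nu>2 * ln (Gam p q 1) + (1 - \<nu>2) * ln (Gam p q 0)))"
proof -
  define Bd where "Bd = exp (real L * (\<nu>2 * ln (Gam p q 1) + (1 - \<nu>2) * ln (Gam p q 0)))"
  define m where "m = real n * exp (real L * gf p \<nu>3) / (real L + 1)"
  define k where "k = nat \<lfloor>\<nu>2 * real L\<rfloor>"
  define P where "P = (\<lambda>a. Kc L a \<le> k)"
  define \<pi> where "\<pi> = measure_pmf.prob (Rw p L) {a. P a}"
  define \<mu> where "\<mu> = real n * \<pi>"
  have L1: "real L \<ge> 1" using Lbig nu by (smt (verit) divide_pos_pos)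
  have d: "(\<nu>2 - \<nu>3) * real L \<ge> 1"
  proof -
    have "(\<nu>2 - \<nu>3) * real L \<ge> (\<nu>2 - \<nu>3) * (1 / (\<nu>2 - \<nu>3))"
      using Lbig nu by (intro mult_left_mono) auto
    then show ?thesis using nu by simp
  qed
  have fl0: "\<lfloor>\<nu>2 * real L\<rfloor> \<ge> 0" using nu L1 by simp
  have k_le: "real k \<le> \<nu>2 * real L" using fl0 by (simp add: k_def)
  have k_gt: "real k > \<nu>2 * real L - 1" using fl0 by (simp add: k_def)
  have k_ge: "real k \<ge> \<nu>3 * real L" using k_gt d by (simp add: algebra_simps)
  have k0: "0 < k" using k_ge nu L1 by (smt (verit) mult_pos_pos of_nat_0_less_iff)
  have kL: "k < L"
  proof -
    have "\<nu>2 * real L < 1 * real L" using nu p L1 by (intro mult_strict_right_mono) auto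
    then show ?thesis using k_le by simp
  qed
  have r1: "\<nu>3 \<le> real k / real L" using k_ge L1 by (simp add: field_simps)
  have r2: "real k / real L \<le> p"
  proof -
    have "\<nu>2 * real L \<le> p * real L" using nu L1 by (intro mult_right_mono) auto
    then have "real k \<le> p * real L" using k_le by linarith
    then show ?thesis using L1 by (simp add: pos_divide_le_eq)
  qed
  have pi_ge: "\<pi> \<ge> exp (real L * gf p \<nu>3) / (real L + 1)"
  proof -
    have "exp (real L * gf p \<nu>3) / (real L + 1) \<le> exp (real L * gf p (real k / real L)) / (real L + 1)"
      using gf_mono[OF p nu(1) r1 r2] by (intro divide_right_mono) (auto intro: mult_left_mono)
    also have "\<dots> \<le> real (L choose k) * p ^ k * (1 - p) ^ (L - k)"
      by (rule binom_term_lower[OF p k0 kL])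
    also have "\<dots> \<le> \<pi>" unfolding \<pi>_def P_def by (rule binom_lower[OF p])
    finally show ?thesis .
  qed
  have mu_ge: "\<mu> \<ge> m" unfolding \<mu>_def m_def using pi_ge n
    by (simp add: mult_left_mono divide_inverse mult.assoc)
  have m0: "m > 0" unfolding m_def using n L1 by simp
  have mu0: "\<mu> > 0" using mu_ge m0 by simp
  have Bd: "GLf p q L a \<le> Bd" if "P a" for a
    unfolding Bd_def
    by (rule GLf_le[OF q p c]) (use that k_le in \<open>auto simp: P_def\<close>)
  have "measure_pmf.prob (mag_pmf p q n L) {E. no_isolated n E}
     \<le> measure_pmf.prob (Rows p n L) {r. real (card {u\<in>{1..n}. P (r u)}) \<le> \<mu> / 2}
       + 2 / \<mu> * (real n * real (n - 1) * (\<pi> * Bd))"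
    by (rule part0_bound[OF q p \<pi>_def \<mu>_def mu0 Bd])
  also have "measure_pmf.prob (Rows p n L) {r. real (card {u\<in>{1..n}. P (r u)}) \<le> \<mu> / 2}
       \<le> exp (\<mu> * (ln 2 - 1) / 2)"
    by (rule rows_chernoff[OF \<pi>_def \<mu>_def])
  also have "exp (\<mu> * (ln 2 - 1) / 2) \<le> exp (m * ((ln 2 - 1) / 2))"
    using mu_ge ln_2_less_1 by (simp add: mult_right_mono_neg)
  also have "2 / \<mu> * (real n * real (n - 1) * (\<pi> * Bd)) = 2 * real (n - 1) * Bd"
  proof -
    have "\<pi> \<noteq> 0" "real n \<noteq> 0" using mu0 n unfolding \<mu>_def by auto
    then show ?thesis unfolding \<mu>_def by (simp add: field_simps)
  qed
  also have "\<dots> \<le> 2 * real n * Bd" unfolding Bd_def by (intro mult_right_mono) auto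
  finally show ?thesis by (simp add: m_def Bd_def)
qed



lemma powr_as_exp: "real n > 0 \<Longrightarrow> real n powr d = exp (d * ln (real n))"
  by (simp add: powr_def mult.commute)

lemma part1_lim:
  assumes q: "qok q" and p: "0 < p" "p < 1" and c: "ln (Gam p q 0) \<le> ln (Gam p q 1)"
    and R: "((\<lambda>n. real (L n) / ln (real n)) \<longlongrightarrow> \<rho>) sequentially" and rho: "\<rho> > 0"
    and nu: "0 < \<nu>" "\<nu> < p" and g: "1 + \<rho> * gf p \<nu> < 0"
    and b: "1 + \<rho> * (\<nu> * ln (Gam p q 1) + (1 - \<nu>) * ln (Gam p q 0)) > 0"
  shows "((\<lambda>n. measure_pmf.prob (mag_pmf p q n (L n)) {E. no_isolated n E}) \<longlongrightarrow> 1) sequentially"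
proof -
  define \<beta> where "\<beta> = \<nu> * ln (Gam p q 1) + (1 - \<nu>) * ln (Gam p q 0)"
  define \<delta> where "\<delta> = (1 + \<rho> * \<beta>) / 2"
  have d0: "\<delta> > 0" using b by (simp add: \<delta>_def \<beta>_def)
  define t1 where "t1 = (\<lambda>n. real n * exp (real (L n) * gf p \<nu>))"
  define t2 where "t2 = (\<lambda>n. real n * exp (- (real n - 1) * exp (real (L n) * \<beta>)))"
  have t1: "(t1 \<longlongrightarrow> 0) sequentially" unfolding t1_def by (rule asym_neg[OF R g])
  have bound: "((\<lambda>n::nat. real n * exp (- (real n powr \<delta>) / 2)) \<longlongrightarrow> 0) sequentially"
    using d0 by real_asymp
  have ev: "eventually (\<lambda>n. t2 n \<le> real n * exp (- (real n powr \<delta>) / 2)) sequentially"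
    using asym_pos[OF R b[folded \<beta>_def]] eventually_ge_at_top[of "2::nat"]
  proof (eventually_elim)
    case (elim n)
    have n0: "real n > 0" "real n \<ge> 2" using elim by auto
    have "exp (\<delta> * ln (real n)) \<le> exp (ln (real n) + real (L n) * \<beta>)"
      using elim by (simp add: \<delta>_def)
    then have A: "real n powr \<delta> \<le> real n * exp (real (L n) * \<beta>)"
      using n0 by (simp add: powr_as_exp exp_add)
    have "real n powr \<delta> / 2 \<le> (real n - 1) * exp (real (L n) * \<beta>)"
    proof -
      have "real n powr \<delta> / 2 \<le> real n * exp (real (L n) * \<beta>) / 2" using A by simp
      also have "\<dots> \<le> (real n - 1) * exp (real (L n) * \<beta>)"
      proof -
        have "real n / 2 \<le> real n - 1" using n0 by simp
        then show ?thesis by (simp add: mult_right_mono)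
      qed
      finally show ?thesis .
    qed
    moreover have "- (real n - 1) * exp (real (L n) * \<beta>) = - ((real n - 1) * exp (real (L n) * \<beta>))" by (simp add: algebra_simps)
    ultimately have "- (real n - 1) * exp (real (L n) * \<beta>) \<le> - (real n powr \<delta>) / 2" by linarith
    then have "exp (- (real n - 1) * exp (real (L n) * \<beta>)) \<le> exp (- (real n powr \<delta>) / 2)" by simp
    then show ?case unfolding t2_def using n0 by (intro mult_left_mono) auto
  qed
  have t2: "(t2 \<longlongrightarrow> 0) sequentially"
    by (rule tendsto_sandwich[OF _ ev tendsto_const bound]) (auto simp: t2_def)
  have U: "((\<lambda>n. t1 n + t2 n) \<longlongrightarrow> 0) sequentially" using tendsto_add[OF t1 t2] by simp
  have neg: "((\<lambda>n. measure_pmf.prob (mag_pmf p q n (L n)) {E. \<not> no_isolated n E}) \<longlongrightarrow> 0) sequentially"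
  proof (rule tendsto_sandwich[OF _ _ tendsto_const U])
    show "eventually (\<lambda>n. 0 \<le> measure_pmf.prob (mag_pmf p q n (L n)) {E. \<not> no_isolated n E}) sequentially" by simp
    show "eventually (\<lambda>n. measure_pmf.prob (mag_pmf p q n (L n)) {E. \<not> no_isolated n E} \<le> t1 n + t2 n) sequentially"
      using part1_fixed[OF q p c nu] by (simp add: t1_def t2_def \<beta>_def)
  qed
  have eq: "measure_pmf.prob (mag_pmf p q n (L n)) {E. no_isolated n E}
      = 1 - measure_pmf.prob (mag_pmf p q n (L n)) {E. \<not> no_isolated n E}" for n
  proof -
    have "{E. \<not> no_isolated n E} = space (measure_pmf (mag_pmf p q n (L n))) - {E. no_isolated n E}" by auto
    moreover have "measure_pmf.prob (mag_pmf p q n (L n)) (space (measure_pmf (mag_pmf p q n (L n))) - {E. no_isolated n E})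
        = 1 - measure_pmf.prob (mag_pmf p q n (L n)) {E. no_isolated n E}"
      by (rule measure_pmf.prob_compl) simp
    ultimately show ?thesis by simp
  qed
  show ?thesis unfolding eq using tendsto_diff[OF tendsto_const neg, of 1] by simp
qed

lemma part0_lim:
  assumes q: "qok q" and p: "0 < p" "p < 1" and c: "ln (Gam p q 0) \<le> ln (Gam p q 1)"
    and R: "((\<lambda>n. real (L n) / ln (real n)) \<longlongrightarrow> \<rho>) sequentially" and rho: "\<rho> > 0"
    and nu: "0 < \<nu>3" "\<nu>3 < \<nu>2" "\<nu>2 < p" and g: "1 + \<rho> * gf p \<nu>3 > 0"
    and b: "1 + \<rho> * (\<nu>2 * ln (Gam p q 1) + (1 - \<nu>2) * ln (Gam p q 0)) < 0"
  shows "((\<lambda>n. measure_pmf.prob (mag_pmf p q n (L n)) {E. no_isolated n E}) \<longlongrightarrow> 0) sequentially"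
proof -
  define \<beta> where "\<beta> = \<nu>2 * ln (Gam p q 1) + (1 - \<nu>2) * ln (Gam p q 0)"
  define \<delta> where "\<delta> = (1 + \<rho> * gf p \<nu>3) / 2"
  define \<kappa> where "\<kappa> = (ln 2 - 1) / (2::real)"
  have k0: "\<kappa> < 0" using ln_2_less_1 by (simp add: \<kappa>_def)
  have d0: "\<delta> > 0" using g by (simp add: \<delta>_def)
  define w where "w = (\<lambda>n::nat. real n powr \<delta> / ((\<rho> + 1) * ln (real n) + 1))"
  have w: "filterlim w at_top sequentially"
    unfolding w_def using d0 rho by real_asymp
  have "filterlim (\<lambda>n. \<kappa> * w n) at_bot sequentially"
    by (rule filterlim_tendsto_neg_mult_at_bot[OF tendsto_const k0 w])
  then have e1: "((\<lambda>n. exp (\<kappa> * w n)) \<longlongrightarrow> 0) sequentially"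
    by (rule filterlim_compose[OF exp_at_bot])
  have e2: "((\<lambda>n. 2 * (real n * exp (real (L n) * \<beta>))) \<longlongrightarrow> 0) sequentially"
    using tendsto_mult[OF tendsto_const asym_neg[OF R b[folded \<beta>_def]], of 2] by simp
  have U: "((\<lambda>n. exp (\<kappa> * w n) + 2 * (real n * exp (real (L n) * \<beta>))) \<longlongrightarrow> 0) sequentially"
    using tendsto_add[OF e1 e2] by simp
  have ev: "eventually (\<lambda>n. measure_pmf.prob (mag_pmf p q n (L n)) {E. no_isolated n E}
      \<le> exp (\<kappa> * w n) + 2 * (real n * exp (real (L n) * \<beta>))) sequentially"
    using asym_L_large[OF R rho, of "1 / (\<nu>2 - \<nu>3) + 1"] asym_pos[OF R g] asym_L_upper[OF R]
      eventually_ge_at_top[of "2::nat"]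
  proof (eventually_elim)
    case (elim n)
    have n0: "real n > 0" "n \<ge> 1" "ln (real n) > 0" using elim by auto
    have "measure_pmf.prob (mag_pmf p q n (L n)) {E. no_isolated n E}
       \<le> exp (real n * exp (real (L n) * gf p \<nu>3) / (real (L n) + 1) * ((ln 2 - 1) / 2))
         + 2 * real n * exp (real (L n) * \<beta>)"
      unfolding \<beta>_def by (rule part0_fixed[OF q p c nu]) (use elim n0 in auto)
    also have M: "real n * exp (real (L n) * gf p \<nu>3) / (real (L n) + 1) \<ge> w n"
    proof -
      have "exp (\<delta> * ln (real n)) \<le> exp (ln (real n) + real (L n) * gf p \<nu>3)"
        using elim by (simp add: \<delta>_def)
      then have A: "real n powr \<delta> \<le> real n * exp (real (L n) * gf p \<nu>3)"
        using n0 by (simp add: powr_as_exp exp_add)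
      have B: "real (L n) + 1 \<le> (\<rho> + 1) * ln (real n) + 1" using elim by simp
      show ?thesis unfolding w_def
        by (rule frac_le) (use A B n0 in auto)
    qed
    then have "real n * exp (real (L n) * gf p \<nu>3) / (real (L n) + 1) * \<kappa> \<le> w n * \<kappa>"
      using k0 by (intro mult_right_mono_neg) auto
    then have "exp (real n * exp (real (L n) * gf p \<nu>3) / (real (L n) + 1) * ((ln 2 - 1) / 2)) \<le> exp (\<kappa> * w n)"
      by (simp add: \<kappa>_def mult.commute)
    finally show ?case by simp
  qed
  show ?thesis
    by (rule tendsto_sandwich[OF _ ev tendsto_const U]) simp
qed



theorem theorem2:
  fixes p \<rho> :: real and q :: "nat \<Rightarrow> nat \<Rightarrow> real" and L :: "nat \<Rightarrow> nat"
  assumes p: "0 < p" "p < 1"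
    and q_sym: "q 0 1 = q 1 0"
    and q_range: "\<And>a b. a \<in> {0, 1} \<Longrightarrow> b \<in> {0, 1} \<Longrightarrow> 0 < q a b \<and> q a b < 1"
    and rho: "\<rho> > 0"
    and Gam_lt: "Gam p q 0 < Gam p q 1"
    and mu0: "1 + \<rho> * ln (1 - p) < 0"
    and adm: "admissible \<rho> L"
  shows "(1 + \<rho> * ln (Gam p q 1 powr nu_star p \<rho> * Gam p q 0 powr (1 - nu_star p \<rho>)) < 0 \<longrightarrow>
           ((\<lambda>n. measure_pmf.prob (mag_pmf p q n (L n)) {E. no_isolated n E}) \<longlonglongrightarrow> 0))
       \<and> (1 + \<rho> * ln (Gam p q 1 powr nu_star p \<rho> * Gam p q 0 powr (1 - nu_star p \<rho>)) > 0 \<longrightarrow>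
           ((\<lambda>n. measure_pmf.prob (mag_pmf p q n (L n)) {E. no_isolated n E}) \<longlonglongrightarrow> 1))"
proof -
  have q: "qok q" unfolding qok_def using q_sym q_range by auto
  define c0 where "c0 = ln (Gam p q 0)"
  define c1 where "c1 = ln (Gam p q 1)"
  have G0: "0 < Gam p q 0" using Gam_pos[OF q p, of 0] by simp
  have G1: "0 < Gam p q 1" using G0 Gam_lt by simp
  have c01: "c0 < c1" unfolding c0_def c1_def using G0 Gam_lt by simp
  have c: "ln (Gam p q 0) \<le> ln (Gam p q 1)" using c01 by (simp add: c0_def c1_def)
  have R: "((\<lambda>n. real (L n) / ln (real n)) \<longlongrightarrow> \<rho>) sequentially" by (rule adm_ratio[OF rho adm])
  define s where "s = nu_star p \<rho>"
  have s: "0 < s" "s < p" "1 + \<rho> * gf p s = 0" using nu_star_props[OF p rho mu0] by (auto simp: s_def)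
  define bs where "bs = s * c1 + (1 - s) * c0"
  have lnexp: "ln (Gam p q 1 powr s * Gam p q 0 powr (1 - s)) = bs"
    using G0 G1 by (simp add: ln_mult ln_powr bs_def c0_def c1_def)
  have beta: "(s + e) * c1 + (1 - (s + e)) * c0 = bs + e * (c1 - c0)" for e
    by (simp add: bs_def algebra_simps)
  have dc: "c1 - c0 > 0" using c01 by simp
  show ?thesis unfolding s_def[symmetric] lnexp
  proof (intro conjI impI)
    assume neg: "1 + \<rho> * bs < 0"
    define \<eta> where "\<eta> = min ((p - s) / 2) (- (1 + \<rho> * bs) / (2 * \<rho> * (c1 - c0)))"
    have eta0: "\<eta> > 0" using s neg rho dc by (simp add: \<eta>_def divide_pos_pos)
    have eta1: "\<eta> \<le> (p - s) / 2" unfolding \<eta>_def by (rule min.cobounded1)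
    have eta2: "\<eta> \<le> - (1 + \<rho> * bs) / (2 * \<rho> * (c1 - c0))" unfolding \<eta>_def by (rule min.cobounded2)
    have "\<rho> * (\<eta> * (c1 - c0)) \<le> \<rho> * ((- (1 + \<rho> * bs) / (2 * \<rho> * (c1 - c0))) * (c1 - c0))"
      using eta2 rho dc by (intro mult_left_mono mult_right_mono) auto
    also have "\<dots> = - (1 + \<rho> * bs) / 2" using rho dc by (simp add: field_simps)
    finally have b2: "1 + \<rho> * ((s + \<eta>) * c1 + (1 - (s + \<eta>)) * c0) < 0"
      unfolding beta using neg by (simp add: algebra_simps)
    have "gf p s < gf p (s + \<eta> / 2)" using gf_strict_mono[OF p, of s "s + \<eta> / 2"] s eta0 eta1 by simp
    then have g3: "1 + \<rho> * gf p (s + \<eta> / 2) > 0" using s rho by (smt (verit) mult_strict_left_mono)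
    show "((\<lambda>n. measure_pmf.prob (mag_pmf p q n (L n)) {E. no_isolated n E}) \<longlongrightarrow> 0) sequentially"
      by (rule part0_lim[OF q p c R rho _ _ _ g3, of "s + \<eta>"])
         (use s eta0 eta1 b2 in \<open>auto simp: c0_def c1_def\<close>)
  next
    assume pos: "1 + \<rho> * bs > 0"
    define \<eta> where "\<eta> = min (s / 2) ((1 + \<rho> * bs) / (2 * \<rho> * (c1 - c0)))"
    have eta0: "\<eta> > 0" using s pos rho dc by (simp add: \<eta>_def divide_pos_pos)
    have eta1: "\<eta> \<le> s / 2" unfolding \<eta>_def by (rule min.cobounded1)
    have eta2: "\<eta> \<le> (1 + \<rho> * bs) / (2 * \<rho> * (c1 - c0))" unfolding \<eta>_def by (rule min.cobounded2)
    have "\<rho> * (\<eta> * (c1 - c0)) \<le> \<rho> * (((1 + \<rho> * bs) / (2 * \<rho> * (c1 - c0))) * (c1 - c0))"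
      using eta2 rho dc by (intro mult_left_mono mult_right_mono) auto
    also have "\<dots> = (1 + \<rho> * bs) / 2" using rho dc by (simp add: field_simps)
    finally have b1: "1 + \<rho> * ((s + - \<eta>) * c1 + (1 - (s + - \<eta>)) * c0) > 0"
      unfolding beta using pos by (simp add: algebra_simps)
    have "gf p (s - \<eta>) < gf p s" using gf_strict_mono[OF p, of "s - \<eta>" s] s eta0 eta1 by simp
    then have g1: "1 + \<rho> * gf p (s - \<eta>) < 0" using s rho by (smt (verit) mult_strict_left_mono)
    show "((\<lambda>n. measure_pmf.prob (mag_pmf p q n (L n)) {E. no_isolated n E}) \<longlongrightarrow> 1) sequentially"
      by (rule part1_lim[OF q p c R rho _ _ g1]) (use s eta0 eta1 b1 in \<open>auto simp: c0_def c1_def\<close>)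
  qed
qed

end
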